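(* Let $\mathbf H$ be a Hopf submonoid of $\mathbf{GP}$ spanned by a family of generalized permutahedra, let $\Bbbk$ be a field of characteristic $0$, and let $\zeta$ be a character of $\mathbf H$ with values in $\Bbbk$ such that each $\zeta_I:\mathbf H[I]\to\Bbbk$ is a strong valuation. Then for every finite set $I$ the three linear maps on $\mathbf H[I]$ $$x\mapsto f_\zeta(x)(t),\qquad x\mapsto\Phi_\zeta(x),\qquad x\mapsto O_\zeta(x)$$ are strong valuations.
   Context: $\mathbf{GP}$ is the Hopf monoid of (bounded) generalized permutahedra: $\mathbf{GP}[I]$ has basis the polytopes $P=\{x\in\mathbb R^I:\sum_{i\in I}x_i=z(I),\ \sum_{i\in A}x_i\le z(A)\ \forall A\subseteq I\}$ for submodular $z:2^I\to\mathbb R$; product $P\cdot Q=P\times Q$; coproduct $\Delta_{S,T}(P)=P|_S\otimes P/_S$ where $P|_S\times P/_S$ is the face of $P$ maximizing $\sum_{i\in S}x_i$. Iterated coproducts $\Delta_{S_1,\dots,S_k}$ are defined by coassociativity. A character $\zeta$ is a family of linear maps $\zeta_I:\mathbf H[I]\to\Bbbk$, natural under bijections, with $\zeta_I(x_1\cdots x_k)=\zeta_{S_1}(x_1)\cdots\zeta_{S_k}(x_k)$ for $x_i\in\mathbf H[S_i]$, $I=S_1\sqcup\dots\sqcup S_k$, and $\zeta_\emptyset(1)=1$. For $x\in\mathbf H[I]$ and integers $k\ge1$ let $\zeta^{*k}(x)=\sum_{S_1\sqcup\cdots\sqcup S_k=I}(\zeta_{S_1}\otimes\cdots\otimes\zeta_{S_k})(\Delta_{S_1,\dots,S_k}(x))$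 (sum over set decompositions with possibly empty parts, tensor product of scalars multiplied); $f_\zeta(x)(t)\in\Bbbk[t]$ is the unique polynomial with $f_\zeta(x)(k)=\zeta^{*k}(x)$ for all positive integers $k$. $\Phi_\zeta(x)=\sum_{(S_1,\dots,S_k)}(\zeta_{S_1}\otimes\cdots\otimes\zeta_{S_k})(\Delta_{S_1,\dots,S_k}(x))\,M_{(|S_1|,\dots,|S_k|)}$, a quasisymmetric function, summing over all ordered set partitions of $I$ into nonempty blocks, where $M_\alpha$ denotes the monomial quasisymmetric function. $O_\zeta(x)$ is the same sum with $M_{(|S_1|,\dots,|S_k|)}$ replaced by the basis element $[S_1|\cdots|S_k]$ of the vector space with basis the ordered set partitions of $I$. For $\mathbf H$ spanned by a family of polytopes, a linear map $f:\mathbf H[I]\to A$ is a strong valuation if there is linear $\hat f$ on the span $\mathbb I(\mathbf H)[I]$ of indicator functions $\mathbb 1_P$ ($P$ in the family) with $f(P)=\hat f(\mathbb 1_P)$ for all such $P$. *)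

theory Defs
  imports Main "HOL-Computational_Algebra.Polynomial" "HOL-Library.Function_Algebras"
begin

text \<open>Points of R^I are functions 'a => real vanishing outside I; a polytope in R^I is a
  set of such functions. Since a polytope does not determine its ground set I, all
  species-level data (families, characters) take the ground set as an extra argument.\<close>

type_synonym 'a pt = "'a \<Rightarrow> real"

definition submodular_on :: "'a set \<Rightarrow> ('a set \<Rightarrow> real) \<Rightarrow> bool" where
  "submodular_on I z \<longleftrightarrow> z {} = 0 \<and>
     (\<forall>A B. A \<subseteq> I \<longrightarrow> B \<subseteq> I \<longrightarrow> z (A \<union> B) + z (A \<inter> B) \<le> z A + z B)"

definition gen_perm :: "'a set \<Rightarrow> ('a set \<Rightarrow> real) \<Rightarrow> 'a pt set" where
  "gen_perm I z = {x. (\<forall>i. i \<notin> I \<longrightarrow> x i = 0) \<and> (\<Sum>i\<in>I. x i) = z I \<and>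
                      (\<forall>A. A \<subseteq> I \<longrightarrow> (\<Sum>i\<in>A. x i) \<le> z A)}"

definition is_GP :: "'a set \<Rightarrow> 'a pt set \<Rightarrow> bool" where
  "is_GP I P \<longleftrightarrow> (\<exists>z. submodular_on I z \<and> P = gen_perm I z)"

definition pprod :: "'a set \<Rightarrow> 'a pt set \<Rightarrow> 'a pt set \<Rightarrow> 'a pt set" where
  "pprod S P Q = {(\<lambda>i. if i \<in> S then x i else y i) | x y. x \<in> P \<and> y \<in> Q}"

definition max_face :: "'a pt set \<Rightarrow> 'a set \<Rightarrow> 'a pt set" where
  "max_face P S = {x \<in> P. \<forall>y\<in>P. (\<Sum>i\<in>S. y i) \<le> (\<Sum>i\<in>S. x i)}"

text \<open>Restriction P|_S and contraction P/_S: the two factors of the face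
  max_face P S = P|_S x P/_S.\<close>
definition restr :: "'a pt set \<Rightarrow> 'a set \<Rightarrow> 'a pt set" where
  "restr P S = (\<lambda>x i. if i \<in> S then x i else 0) ` max_face P S"

definition contr :: "'a pt set \<Rightarrow> 'a set \<Rightarrow> 'a pt set" where
  "contr P S = (\<lambda>x i. if i \<in> S then 0 else x i) ` max_face P S"

definition relabel :: "('a \<Rightarrow> 'a) \<Rightarrow> 'a set \<Rightarrow> 'a set \<Rightarrow> 'a pt set \<Rightarrow> 'a pt set" where
  "relabel \<sigma> I J P = (\<lambda>x j. if j \<in> J then x (inv_into I \<sigma> j) else 0) ` P"

text \<open>H is a Hopf submonoid of GP spanned by the family F (F I = the basis polytopes of H[I]).\<close>
definition hopf_subGP :: "('a set \<Rightarrow> 'a pt set set) \<Rightarrow> bool" where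
  "hopf_subGP F \<longleftrightarrow>
     (\<forall>I. finite I \<longrightarrow> (\<forall>P\<in>F I. is_GP I P)) \<and>
     {\<lambda>_. 0} \<in> F {} \<and>
     (\<forall>S T P Q. finite S \<longrightarrow> finite T \<longrightarrow> S \<inter> T = {} \<longrightarrow> P \<in> F S \<longrightarrow> Q \<in> F T \<longrightarrow>
        pprod S P Q \<in> F (S \<union> T)) \<and>
     (\<forall>I S P. finite I \<longrightarrow> S \<subseteq> I \<longrightarrow> P \<in> F I \<longrightarrow>
        restr P S \<in> F S \<and> contr P S \<in> F (I - S)) \<and>
     (\<forall>\<sigma> I J P. finite I \<longrightarrow> bij_betw \<sigma> I J \<longrightarrow> P \<in> F I \<longrightarrow> relabel \<sigma> I J P \<in> F J)"

text \<open>A character of H (given by its values on basis polytopes, extended linearly).\<close>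
definition is_character ::
  "('a set \<Rightarrow> 'a pt set set) \<Rightarrow> ('a set \<Rightarrow> 'a pt set \<Rightarrow> 'k::field) \<Rightarrow> bool" where
  "is_character F \<zeta> \<longleftrightarrow>
     (\<forall>\<sigma> I J P. finite I \<longrightarrow> bij_betw \<sigma> I J \<longrightarrow> P \<in> F I \<longrightarrow>
        \<zeta> J (relabel \<sigma> I J P) = \<zeta> I P) \<and>
     (\<forall>S T P Q. finite S \<longrightarrow> finite T \<longrightarrow> S \<inter> T = {} \<longrightarrow> P \<in> F S \<longrightarrow> Q \<in> F T \<longrightarrow>
        \<zeta> (S \<union> T) (pprod S P Q) = \<zeta> S P * \<zeta> T Q) \<and>
     \<zeta> {} {\<lambda>_. 0} = 1"

definition ind :: "'a pt set \<Rightarrow> 'a pt \<Rightarrow> 'k::field" where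
  "ind P = (\<lambda>x. if x \<in> P then 1 else 0)"

definition ind_span :: "('a set \<Rightarrow> 'a pt set set) \<Rightarrow> 'a set \<Rightarrow> ('a pt \<Rightarrow> 'k::field) set" where
  "ind_span F I = {(\<lambda>x. \<Sum>P\<in>Q. c P * ind P x) | Q c. finite Q \<and> Q \<subseteq> F I}"

text \<open>A linear map f : H[I] -> A (given on the basis F I; sc is the scalar action of k on A)
  is a strong valuation if it factors through a k-linear map on the span of indicators.\<close>
definition strong_valuation ::
  "('a set \<Rightarrow> 'a pt set set) \<Rightarrow> 'a set \<Rightarrow> ('k::field \<Rightarrow> 'v::ab_group_add \<Rightarrow> 'v) \<Rightarrow>
   ('a pt set \<Rightarrow> 'v) \<Rightarrow> bool" where
  "strong_valuation F I sc f \<longleftrightarrow>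
     (\<exists>fh :: ('a pt \<Rightarrow> 'k) \<Rightarrow> 'v.
        (\<forall>u\<in>ind_span F I. \<forall>v\<in>ind_span F I. \<forall>a b.
            fh (\<lambda>x. a * u x + b * v x) = sc a (fh u) + sc b (fh v)) \<and>
        (\<forall>P\<in>F I. f P = fh (ind P)))"

text \<open>Iterated coproduct Delta_{S1,...,Sk}(P), defined by coassociativity.\<close>
fun icoprod :: "'a set list \<Rightarrow> 'a pt set \<Rightarrow> 'a pt set list" where
  "icoprod [] P = []"
| "icoprod (S # Ss) P = restr P S # icoprod Ss (contr P S)"

definition set_decomps :: "'a set \<Rightarrow> nat \<Rightarrow> 'a set list set" where
  "set_decomps I k = {Ss. length Ss = k \<and> \<Union>(set Ss) = I \<and>
      (\<forall>i<k. \<forall>j<k. i \<noteq> j \<longrightarrow> Ss ! i \<inter> Ss ! j = {})}"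

definition ord_set_parts :: "'a set \<Rightarrow> 'a set list set" where
  "ord_set_parts I = {Ss. Ss \<in> set_decomps I (length Ss) \<and> (\<forall>S\<in>set Ss. S \<noteq> {})}"

definition zeta_tensor :: "('a set \<Rightarrow> 'a pt set \<Rightarrow> 'k::field) \<Rightarrow> 'a set list \<Rightarrow> 'a pt set \<Rightarrow> 'k" where
  "zeta_tensor \<zeta> Ss P = prod_list (map2 \<zeta> Ss (icoprod Ss P))"

definition conv_pow :: "('a set \<Rightarrow> 'a pt set \<Rightarrow> 'k::field) \<Rightarrow> 'a set \<Rightarrow> nat \<Rightarrow> 'a pt set \<Rightarrow> 'k" where
  "conv_pow \<zeta> I k P = (\<Sum>Ss\<in>set_decomps I k. zeta_tensor \<zeta> Ss P)"

text \<open>f_zeta(P)(t): the unique polynomial with f(k) = zeta^{*k}(P) for all k >= 1.\<close>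
definition f_zeta :: "('a set \<Rightarrow> 'a pt set \<Rightarrow> 'k::field_char_0) \<Rightarrow> 'a set \<Rightarrow> 'a pt set \<Rightarrow> 'k poly" where
  "f_zeta \<zeta> I P = (THE p. \<forall>k::nat. k \<ge> 1 \<longrightarrow> poly p (of_nat k) = conv_pow \<zeta> I k P)"

text \<open>Phi_zeta(P) in QSym, represented by its coefficients in the monomial basis M_alpha
  (alpha a composition, i.e. a list of positive naturals).\<close>
definition Phi_zeta :: "('a set \<Rightarrow> 'a pt set \<Rightarrow> 'k::field) \<Rightarrow> 'a set \<Rightarrow> 'a pt set \<Rightarrow> (nat list \<Rightarrow> 'k)" where
  "Phi_zeta \<zeta> I P = (\<lambda>\<alpha>. \<Sum>Ss\<in>{Ss \<in> ord_set_parts I. map card Ss = \<alpha>}. zeta_tensor \<zeta> Ss P)"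

text \<open>O_zeta(P), represented by its coefficients in the basis of ordered set partitions.\<close>
definition O_zeta :: "('a set \<Rightarrow> 'a pt set \<Rightarrow> 'k::field) \<Rightarrow> 'a set \<Rightarrow> 'a pt set \<Rightarrow> ('a set list \<Rightarrow> 'k)" where
  "O_zeta \<zeta> I P = (\<lambda>Ss. if Ss \<in> ord_set_parts I then zeta_tensor \<zeta> Ss P else 0)"

end

theory Submission
  imports Defs "HOL-Analysis.Analysis"
begin
definition conv_set :: "('a \<Rightarrow> real) set \<Rightarrow> bool" where
  "conv_set X \<longleftrightarrow> (\<forall>x\<in>X. \<forall>y\<in>X. \<forall>s::real. 0 \<le> s \<longrightarrow> s \<le> 1 \<longrightarrow> (\<lambda>i. (1-s)*x i + s*y i) \<in> X)"

lemma euler1d: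
  fixes c :: "'b \<Rightarrow> 'k::comm_ring_1" and J :: "'b \<Rightarrow> real set"
  assumes fin: "finite K"
    and iv: "\<And>k. k\<in>K \<Longrightarrow> J k = {} \<or> (\<exists>lo hi. lo \<le> hi \<and> J k = {lo..hi})"
    and rel: "\<And>\<beta>. (\<Sum>k\<in>K. c k * (if \<beta> \<in> J k then 1 else 0)) = 0"
  shows "(\<Sum>k\<in>{k\<in>K. J k \<noteq> {}}. c k) = 0"
proof -
  define K' where "K' = {k\<in>K. J k \<noteq> {}}"
  have "\<forall>k\<in>K'. \<exists>lh. fst lh \<le> snd lh \<and> J k = {fst lh..snd lh}"
    using iv unfolding K'_def by fastforce
  then obtain lh where lh: "\<And>k. k\<in>K' \<Longrightarrow> fst (lh k) \<le> snd (lh k) \<and> J k = {fst (lh k)..snd (lh k)}"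
    by metis
  define hi where "hi k = snd (lh k)" for k
  define lo where "lo k = fst (lh k)" for k
  have Jk: "\<And>k. k\<in>K' \<Longrightarrow> lo k \<le> hi k \<and> J k = {lo k..hi k}" using lh by (simp add: lo_def hi_def)
  have finK': "finite K'" using fin by (simp add: K'_def)
  have step: "(\<Sum>k\<in>{k\<in>K'. hi k = \<beta>}. c k) = 0" for \<beta>
  proof -
    define Q where "Q k \<longleftrightarrow> k \<in> K' \<and> hi k = \<beta>" for k
    have ev: "\<forall>k\<in>K. eventually (\<lambda>\<eta>. (\<beta>+\<eta> \<in> J k) \<longleftrightarrow> (\<beta> \<in> J k \<and> \<not> Q k)) (at_right 0)"
    proof
      fix k assume kK: "k\<in>K"
      show "eventually (\<lambda>\<eta>. (\<beta>+\<eta> \<in> J k) \<longleftrightarrow> (\<beta> \<in> J k \<and> \<not> Q k)) (at_right 0)"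
      proof (cases "k \<in> K'")
        case False
        then have "J k = {}" using kK by (simp add: K'_def)
        then show ?thesis by simp
      next
        case True
        note J = Jk[OF True]
        show ?thesis
        proof (cases "hi k \<le> \<beta>")
          case True
          then show ?thesis unfolding eventually_at_right_field
            using J \<open>k\<in>K'\<close> by (intro exI[of _ 1]) (auto simp: Q_def)
        next
          case False
          show ?thesis
          proof (cases "lo k \<le> \<beta>")
            case True
            then show ?thesis unfolding eventually_at_right_field
              using J False \<open>k\<in>K'\<close> by (intro exI[of _ "hi k - \<beta>"]) (auto simp: Q_def)
          next
            case F2: False
            then show ?thesis unfolding eventually_at_right_field
              using J False \<open>k\<in>K'\<close> by (intro exI[of _ "lo k - \<beta>"]) (auto simp: Q_def)
          qed
        qed
      qed
    qed
    have "eventually (\<lambda>\<eta>. \<forall>k\<in>K. (\<beta>+\<eta> \<in> J k) \<longleftrightarrow> (\<beta> \<in> J k \<and> \<not> Q k)) (at_right (0::real))"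
      using eventually_ball_finite[OF fin ev] .
    then obtain \<eta> where eta: "\<forall>k\<in>K. (\<beta>+\<eta> \<in> J k) \<longleftrightarrow> (\<beta> \<in> J k \<and> \<not> Q k)"
      using eventually_happens[of _ "at_right (0::real)"] by auto
    have "0 = (\<Sum>k\<in>K. c k * (if \<beta> \<in> J k then 1 else 0)) - (\<Sum>k\<in>K. c k * (if \<beta>+\<eta> \<in> J k then 1 else 0))"
      using rel[of \<beta>] rel[of "\<beta>+\<eta>"] by simp
    also have "\<dots> = (\<Sum>k\<in>K. c k * (if Q k then 1 else 0))"
      unfolding sum_subtractf[symmetric]
    proof (rule sum.cong[OF refl])
      fix k assume "k\<in>K"
      have "Q k \<Longrightarrow> \<beta> \<in> J k" using Jk by (auto simp: Q_def)
      then show "c k * (if \<beta> \<in> J k then 1 else 0) - c k * (if \<beta> + \<eta> \<in> J k then 1 else 0) =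
           c k * (if Q k then 1 else 0)" using eta \<open>k\<in>K\<close> by auto
    qed
    also have "\<dots> = (\<Sum>k\<in>{k\<in>K. Q k}. c k)"
      by (simp add: sum.inter_filter[OF fin, symmetric] if_distrib cong: if_cong)
    also have "{k\<in>K. Q k} = {k\<in>K'. hi k = \<beta>}" by (auto simp: Q_def K'_def)
    finally show ?thesis by simp
  qed
  have "(\<Sum>k\<in>K'. c k) = (\<Sum>\<beta>\<in>hi ` K'. \<Sum>k\<in>{k\<in>K'. hi k = \<beta>}. c k)"
    using sum.image_gen[OF finK', of c hi] .
  also have "\<dots> = 0" using step by simp
  finally show ?thesis by (simp add: K'_def)
qed

lemma closed_coord_eq: "closed {u::'a\<Rightarrow>real. u i = b}"
  by (rule closed_Collect_eq) (auto intro: continuous_intros)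

lemma compact_coord_interval:
  fixes X :: "('a \<Rightarrow> real) set"
  assumes "compact X" "conv_set X"
  shows "(\<lambda>u. u i) ` X = {} \<or> (\<exists>lo hi. lo \<le> hi \<and> (\<lambda>u. u i) ` X = {lo..hi})"
proof (cases "X = {}")
  case False
  have cX: "compact ((\<lambda>u. u i) ` X)"
    by (rule compact_continuous_image[OF _ assms(1)]) (rule continuous_on_subset[OF continuous_on_product_coordinates], simp)
  have ne: "(\<lambda>u. u i) ` X \<noteq> {}" using False by simp
  obtain a where a: "a \<in> X" "\<forall>v\<in>X. a i \<le> v i"
    using compact_attains_inf[OF cX ne] by auto
  obtain b where b: "b \<in> X" "\<forall>v\<in>X. v i \<le> b i"
    using compact_attains_sup[OF cX ne] by auto
  have "(\<lambda>u. u i) ` X = {a i..b i}"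
  proof
    show "(\<lambda>u. u i) ` X \<subseteq> {a i..b i}" using a b by auto
    show "{a i..b i} \<subseteq> (\<lambda>u. u i) ` X"
    proof
      fix \<beta> assume \<beta>: "\<beta> \<in> {a i..b i}"
      show "\<beta> \<in> (\<lambda>u. u i) ` X"
      proof (cases "a i = b i")
        case True then show ?thesis using \<beta> a by (auto intro!: image_eqI[of _ _ a])
      next
        case False
        then have ab: "a i < b i" using \<beta> by auto
        define s where "s = (\<beta> - a i) / (b i - a i)"
        have s01: "0 \<le> s" "s \<le> 1" using \<beta> ab by (auto simp: s_def field_simps)
        have mem: "(\<lambda>j. (1-s)*a j + s*b j) \<in> X"
          using assms(2) a b s01 unfolding conv_set_def by blast
        have e1: "(1-s)*a i + s*b i = a i + s*(b i - a i)" by (simp add: algebra_simps)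
        have "s*(b i - a i) = \<beta> - a i" using ab by (simp add: s_def)
        then have "(1-s)*a i + s*b i = \<beta>" using e1 by simp
        then show ?thesis using mem by (auto intro!: image_eqI[of _ _ "(\<lambda>j. (1-s)*a j + s*b j)"])
      qed
    qed
  qed
  then show ?thesis using a b by auto
qed simp

lemma conv_set_Int: "conv_set A \<Longrightarrow> conv_set B \<Longrightarrow> conv_set (A \<inter> B)"
  unfolding conv_set_def by blast

lemma conv_set_coord: "conv_set {u::'a\<Rightarrow>real. u i = b}"
  unfolding conv_set_def by (auto simp: algebra_simps)

lemma euler:
  fixes c :: "'b \<Rightarrow> 'k::field"
  assumes "finite J" "finite K"
    and "\<And>k. k\<in>K \<Longrightarrow> compact (X k) \<and> conv_set (X k) \<and> X k \<subseteq> {u. \<forall>j. j \<notin> J \<longrightarrow> u j = p j}"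
    and "\<And>u. (\<Sum>k\<in>K. c k * ind (X k) u) = 0"
  shows "(\<Sum>k\<in>{k\<in>K. X k \<noteq> {}}. c k) = 0"
  using assms
proof (induction J arbitrary: X p rule: finite_induct)
  case empty
  have sub: "X k \<subseteq> {p}" if "k\<in>K" for k
  proof
    fix u assume "u \<in> X k"
    then have "\<forall>j. u j = p j" using empty.prems(2)[OF that] by auto
    then show "u \<in> {p}" by auto
  qed
  have ne: "X k \<noteq> {} \<longleftrightarrow> p \<in> X k" if "k\<in>K" for k using sub[OF that] by auto
  have "0 = (\<Sum>k\<in>K. c k * ind (X k) p)" using empty.prems(3) by simp
  also have "\<dots> = (\<Sum>k\<in>K. if p \<in> X k then c k else 0)"
    by (rule sum.cong) (auto simp: ind_def)
  also have "\<dots> = (\<Sum>k\<in>{k\<in>K. p \<in> X k}. c k)"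
    by (simp add: sum.inter_filter[OF \<open>finite K\<close>])
  also have "{k\<in>K. p \<in> X k} = {k\<in>K. X k \<noteq> {}}" using ne by auto
  finally show ?case by simp
next
  case (insert i J)
  define Y where "Y \<beta> k = X k \<inter> {u. u i = \<beta>}" for \<beta> k
  have IH: "(\<Sum>k\<in>{k\<in>K. Y \<beta> k \<noteq> {}}. c k) = 0" for \<beta>
  proof (rule insert.IH[of "Y \<beta>" "p(i:=\<beta>)"])
    show "finite K" by fact
    fix k assume kK: "k\<in>K"
    note Xk = insert.prems(2)[OF kK]
    show "compact (Y \<beta> k) \<and> conv_set (Y \<beta> k) \<and> Y \<beta> k \<subseteq> {u. \<forall>j. j \<notin> J \<longrightarrow> u j = (p(i := \<beta>)) j}"
    proof (intro conjI)
      show "compact (Y \<beta> k)" unfolding Y_def using Xk by (intro compact_Int_closed closed_coord_eq) auto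
      show "conv_set (Y \<beta> k)" unfolding Y_def using Xk by (intro conv_set_Int conv_set_coord) auto
      show "Y \<beta> k \<subseteq> {u. \<forall>j. j \<notin> J \<longrightarrow> u j = (p(i := \<beta>)) j}"
        unfolding Y_def using Xk by auto
    qed
  next
    fix u
    have "(\<Sum>k\<in>K. c k * ind (Y \<beta> k) u) = (if u i = \<beta> then (\<Sum>k\<in>K. c k * ind (X k) u) else 0)"
      by (simp add: Y_def ind_def)
    then show "(\<Sum>k\<in>K. c k * ind (Y \<beta> k) u) = 0" using insert.prems(3) by simp
  qed
  have "(\<Sum>k\<in>{k\<in>K. (\<lambda>u. u i) ` X k \<noteq> {}}. c k) = 0"
  proof (rule euler1d[OF \<open>finite K\<close>])
    fix k assume "k\<in>K"
    then have "compact (X k)" "conv_set (X k)" using insert.prems(2) by auto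
    then show "(\<lambda>u. u i) ` X k = {} \<or> (\<exists>lo hi. lo \<le> hi \<and> (\<lambda>u. u i) ` X k = {lo..hi})"
      by (rule compact_coord_interval)
  next
    fix \<beta>
    have "(\<Sum>k\<in>K. c k * (if \<beta> \<in> (\<lambda>u. u i) ` X k then 1 else 0)) = (\<Sum>k\<in>K. if Y \<beta> k \<noteq> {} then c k else 0)"
    proof (rule sum.cong[OF refl])
      fix k assume "k \<in> K"
      have "(\<beta> \<in> (\<lambda>u. u i) ` X k) \<longleftrightarrow> Y \<beta> k \<noteq> {}" unfolding Y_def image_iff by auto
      then show "c k * (if \<beta> \<in> (\<lambda>u. u i) ` X k then 1 else 0) = (if Y \<beta> k \<noteq> {} then c k else 0)"
        by simp
    qed
    also have "\<dots> = (\<Sum>k\<in>{k\<in>K. Y \<beta> k \<noteq> {}}. c k)"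
      by (simp add: sum.inter_filter[OF \<open>finite K\<close>])
    finally have "(\<Sum>k\<in>K. c k * (if \<beta> \<in> (\<lambda>u. u i) ` X k then 1 else 0)) = (\<Sum>k\<in>{k\<in>K. Y \<beta> k \<noteq> {}}. c k)" .
    then show "(\<Sum>k\<in>K. c k * (if \<beta> \<in> (\<lambda>u. u i) ` X k then 1 else 0)) = 0" using IH by simp
  qed
  moreover have "{k\<in>K. (\<lambda>u. u i) ` X k \<noteq> {}} = {k\<in>K. X k \<noteq> {}}" by auto
  ultimately show ?case by simp
qed

lemma gen_perm_iff: "x \<in> gen_perm I z \<longleftrightarrow> (\<forall>i. i \<notin> I \<longrightarrow> x i = 0) \<and> (\<Sum>i\<in>I. x i) = z I \<and>
                      (\<forall>A. A \<subseteq> I \<longrightarrow> (\<Sum>i\<in>A. x i) \<le> z A)"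
  by (simp add: gen_perm_def)

lemma submodular_on_mono: "submodular_on I z \<Longrightarrow> J \<subseteq> I \<Longrightarrow> submodular_on J z"
  unfolding submodular_on_def by blast

lemma greedy:
  assumes "finite I" "submodular_on I z" "S \<subseteq> I"
  shows "\<exists>x\<in>gen_perm I z. (\<Sum>i\<in>S. x i) = z S"
  using assms
proof (induction I arbitrary: S rule: finite_psubset_induct)
  case (psubset I)
  have z0: "z {} = 0" using psubset.prems(1) by (simp add: submodular_on_def)
  show ?case
  proof (cases "I = {}")
    case True
    then have "S = {}" using psubset.prems by auto
    have "(\<lambda>_. 0) \<in> gen_perm I z" using True z0 by (auto simp: gen_perm_iff)
    then show ?thesis using \<open>S = {}\<close> z0 by (intro bexI[of _ "\<lambda>_. 0"]) auto
  next
    case False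
    obtain e where e: "e \<in> I" "e \<notin> S \<or> S = I"
      using False psubset.prems(2) by blast
    define I' where "I' = I - {e}"
    have I'sub: "I' \<subset> I" using e by (auto simp: I'_def)
    have sm': "submodular_on I' z" using submodular_on_mono[OF psubset.prems(1)] I'sub by auto
    obtain x' where x': "x' \<in> gen_perm I' z" "(\<Sum>i\<in>S - {e}. x' i) = z (S - {e})"
      using psubset.IH[OF I'sub sm', of "S - {e}"] psubset.prems(2) by (auto simp: I'_def)
    define x where "x = x'(e := z I - z I')"
    have finI': "finite I'" using psubset.hyps by (simp add: I'_def)
    have x'0: "\<And>i. i \<notin> I' \<Longrightarrow> x' i = 0" and x'I: "(\<Sum>i\<in>I'. x' i) = z I'"
      and x'A: "\<And>A. A \<subseteq> I' \<Longrightarrow> (\<Sum>i\<in>A. x' i) \<le> z A" using x'(1) by (auto simp: gen_perm_iff)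
    have sumx: "(\<Sum>i\<in>A. x i) = (if e \<in> A then z I - z I' + (\<Sum>i\<in>A - {e}. x' i) else (\<Sum>i\<in>A. x' i))"
      if "A \<subseteq> I" for A
    proof -
      have fA: "finite A" using that psubset.hyps finite_subset by auto
      show ?thesis
      proof (cases "e \<in> A")
        case True
        then have "(\<Sum>i\<in>A. x i) = x e + (\<Sum>i\<in>A - {e}. x i)" using fA by (simp add: sum.remove)
        also have "(\<Sum>i\<in>A - {e}. x i) = (\<Sum>i\<in>A - {e}. x' i)" by (rule sum.cong) (auto simp: x_def)
        finally show ?thesis using True by (simp add: x_def)
      next
        case False
        then show ?thesis by (auto simp: x_def intro!: sum.cong)
      qed
    qed
    have eI: "insert e I' = I" "e \<notin> I'" using e by (auto simp: I'_def)
    have xmem: "x \<in> gen_perm I z"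
      unfolding gen_perm_iff
    proof (intro conjI allI impI)
      fix i assume "i \<notin> I" then show "x i = 0" using x'0 e by (auto simp: x_def I'_def)
    next
      show "(\<Sum>i\<in>I. x i) = z I" using sumx[of I] e x'I by (simp add: I'_def)
    next
      fix A assume A: "A \<subseteq> I"
      show "(\<Sum>i\<in>A. x i) \<le> z A"
      proof (cases "e \<in> A")
        case True
        have sub: "z (A \<union> I') + z (A \<inter> I') \<le> z A + z I'"
          using psubset.prems(1) A I'sub unfolding submodular_on_def by blast
        have "A \<union> I' = I" "A \<inter> I' = A - {e}" using A True by (auto simp: I'_def)
        moreover have "(\<Sum>i\<in>A - {e}. x' i) \<le> z (A - {e})" using A by (intro x'A) (auto simp: I'_def)
        ultimately show ?thesis using sumx[OF A] True sub by simp
      next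
        case False
        then have "A \<subseteq> I'" using A by (auto simp: I'_def)
        then show ?thesis using sumx[OF A] False x'A by simp
      qed
    qed
    have "(\<Sum>i\<in>S. x i) = z S"
    proof (cases "e \<in> S")
      case True
      then have "S = I" using e by auto
      then show ?thesis using sumx[of I] e x'I by (simp add: I'_def)
    next
      case False
      then show ?thesis using sumx[OF psubset.prems(2)] x'(2) by simp
    qed
    then show ?thesis using xmem by blast
  qed
qed

lemma max_face_gen_perm:
  assumes "finite I" "submodular_on I z" "S \<subseteq> I"
  shows "max_face (gen_perm I z) S = {x \<in> gen_perm I z. (\<Sum>i\<in>S. x i) = z S}"
proof -
  obtain y where y: "y \<in> gen_perm I z" "(\<Sum>i\<in>S. y i) = z S" using greedy[OF assms] by blast
  have le: "\<And>x. x \<in> gen_perm I z \<Longrightarrow> (\<Sum>i\<in>S. x i) \<le> z S" using assms(3) by (auto simp: gen_perm_iff)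
  show ?thesis unfolding max_face_def
  proof (intro Collect_cong conj_cong refl iffI)
    fix x assume "x \<in> gen_perm I z" "\<forall>y\<in>gen_perm I z. (\<Sum>i\<in>S. y i) \<le> (\<Sum>i\<in>S. x i)"
    then show "(\<Sum>i\<in>S. x i) = z S" using y le[of x] by force
  next
    fix x assume "x \<in> gen_perm I z" "(\<Sum>i\<in>S. x i) = z S"
    then show "\<forall>y\<in>gen_perm I z. (\<Sum>i\<in>S. y i) \<le> (\<Sum>i\<in>S. x i)" using le by auto
  qed
qed

definition mix :: "'a set \<Rightarrow> ('a \<Rightarrow> real) \<Rightarrow> ('a \<Rightarrow> real) \<Rightarrow> ('a \<Rightarrow> real)" where
  "mix S x y = (\<lambda>i. if i \<in> S then x i else y i)"

lemma mixing:
  assumes "finite I" "submodular_on I z" "S \<subseteq> I"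
    and x: "x \<in> max_face (gen_perm I z) S" and y: "y \<in> max_face (gen_perm I z) S"
  shows "mix S x y \<in> max_face (gen_perm I z) S"
proof -
  note MF = max_face_gen_perm[OF assms(1-3)]
  have xP: "x \<in> gen_perm I z" and xS: "(\<Sum>i\<in>S. x i) = z S" using x MF by auto
  have yP: "y \<in> gen_perm I z" and yS: "(\<Sum>i\<in>S. y i) = z S" using y MF by auto
  have fS: "finite S" using assms(1,3) finite_subset by auto
  have split: "(\<Sum>i\<in>A. mix S x y i) = (\<Sum>i\<in>A \<inter> S. x i) + (\<Sum>i\<in>A - S. y i)" if "finite A" for A
  proof -
    have "(\<Sum>i\<in>A. mix S x y i) = (\<Sum>i\<in>A \<inter> S. mix S x y i) + (\<Sum>i\<in>A - S. mix S x y i)"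
      using sum.Int_Diff[OF that] .
    also have "(\<Sum>i\<in>A \<inter> S. mix S x y i) = (\<Sum>i\<in>A \<inter> S. x i)" by (rule sum.cong) (auto simp: mix_def)
    also have "(\<Sum>i\<in>A - S. mix S x y i) = (\<Sum>i\<in>A - S. y i)" by (rule sum.cong) (auto simp: mix_def)
    finally show ?thesis .
  qed
  have yDiff: "(\<Sum>i\<in>A - S. y i) = (\<Sum>i\<in>A \<union> S. y i) - z S" if "finite A" for A
  proof -
    have "A \<union> S = (A - S) \<union> S" by auto
    then have "(\<Sum>i\<in>A \<union> S. y i) = (\<Sum>i\<in>(A - S) \<union> S. y i)" by simp
    also have "\<dots> = (\<Sum>i\<in>A - S. y i) + (\<Sum>i\<in>S. y i)"
      using that fS by (intro sum.union_disjoint) auto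
    finally have "(\<Sum>i\<in>A \<union> S. y i) = (\<Sum>i\<in>A - S. y i) + (\<Sum>i\<in>S. y i)" .
    then show ?thesis using yS by simp
  qed
  have mem: "mix S x y \<in> gen_perm I z"
    unfolding gen_perm_iff
  proof (intro conjI allI impI)
    fix i assume "i \<notin> I" then show "mix S x y i = 0" using xP yP assms(3) by (auto simp: mix_def gen_perm_iff)
  next
    have "(\<Sum>i\<in>I. mix S x y i) = (\<Sum>i\<in>S. x i) + ((\<Sum>i\<in>I \<union> S. y i) - z S)"
      using split[OF assms(1)] yDiff[OF assms(1)] assms(3) by (simp add: Int_absorb1)
    also have "I \<union> S = I" using assms(3) by auto
    finally show "(\<Sum>i\<in>I. mix S x y i) = z I" using xS yP by (simp add: gen_perm_iff)
  next
    fix A assume A: "A \<subseteq> I"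
    have fA: "finite A" using A assms(1) finite_subset by auto
    have "(\<Sum>i\<in>A \<inter> S. x i) \<le> z (A \<inter> S)" using xP A unfolding gen_perm_iff by (meson le_infI1)
    moreover have "(\<Sum>i\<in>A \<union> S. y i) \<le> z (A \<union> S)" using yP A assms(3) unfolding gen_perm_iff by (meson Un_least)
    moreover have "z (A \<union> S) + z (A \<inter> S) \<le> z A + z S"
      using assms(2) A assms(3) unfolding submodular_on_def by blast
    ultimately show "(\<Sum>i\<in>A. mix S x y i) \<le> z A" using split[OF fA] yDiff[OF fA] by simp
  qed
  have "(\<Sum>i\<in>S. mix S x y i) = z S" using split[OF fS] xS by simp
  then show ?thesis using mem MF by auto
qed

lemma prodchar:
  assumes "finite I" "submodular_on I z" "S \<subseteq> I"
  shows "(a \<in> restr (gen_perm I z) S \<and> b \<in> contr (gen_perm I z) S) \<longleftrightarrow>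
         ((\<forall>i. i \<notin> S \<longrightarrow> a i = 0) \<and> (\<forall>i\<in>S. b i = 0) \<and> mix S a b \<in> max_face (gen_perm I z) S)"
proof
  assume "a \<in> restr (gen_perm I z) S \<and> b \<in> contr (gen_perm I z) S"
  then obtain x y where x: "x \<in> max_face (gen_perm I z) S" "a = (\<lambda>i. if i \<in> S then x i else 0)"
    and y: "y \<in> max_face (gen_perm I z) S" "b = (\<lambda>i. if i \<in> S then 0 else y i)"
    by (auto simp: restr_def contr_def)
  have "mix S a b = mix S x y" by (auto simp: x y mix_def)
  then show "(\<forall>i. i \<notin> S \<longrightarrow> a i = 0) \<and> (\<forall>i\<in>S. b i = 0) \<and> mix S a b \<in> max_face (gen_perm I z) S"
    using mixing[OF assms x(1) y(1)] x y by auto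
next
  assume H: "(\<forall>i. i \<notin> S \<longrightarrow> a i = 0) \<and> (\<forall>i\<in>S. b i = 0) \<and> mix S a b \<in> max_face (gen_perm I z) S"
  have "a = (\<lambda>i. if i \<in> S then mix S a b i else 0)" using H by (auto simp: mix_def)
  moreover have "b = (\<lambda>i. if i \<in> S then 0 else mix S a b i)" using H by (auto simp: mix_def)
  ultimately show "a \<in> restr (gen_perm I z) S \<and> b \<in> contr (gen_perm I z) S"
    using H unfolding restr_def contr_def by blast
qed

lemma cont_sum_coord: "continuous_on UNIV (\<lambda>x::'a\<Rightarrow>real. \<Sum>i\<in>A. x i)"
  by (rule continuous_on_sum) simp

lemma closed_sum_eq: "closed {x::'a\<Rightarrow>real. (\<Sum>i\<in>A. x i) = b}"
  by (rule closed_Collect_eq[OF cont_sum_coord continuous_on_const])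

lemma closed_sum_le: "closed {x::'a\<Rightarrow>real. (\<Sum>i\<in>A. x i) \<le> b}"
  by (rule closed_Collect_le[OF cont_sum_coord continuous_on_const])

lemma closed_sum_ge: "closed {x::'a\<Rightarrow>real. b \<le> (\<Sum>i\<in>A. x i)}"
  by (rule closed_Collect_le[OF continuous_on_const cont_sum_coord])

lemma closed_gen_perm: "closed (gen_perm I z)"
proof -
  have eq: "gen_perm I z = (\<Inter>i\<in>-I. {x. x i = 0}) \<inter> {x. (\<Sum>i\<in>I. x i) = z I} \<inter>
          (\<Inter>A\<in>Pow I. {x. (\<Sum>i\<in>A. x i) \<le> z A})"
    apply (rule set_eqI) apply (simp add: gen_perm_def) apply (simp only: Ball_def Compl_iff Pow_iff) done
  have c1: "closed (\<Inter>i\<in>-I. {x::'a\<Rightarrow>real. x i = 0})"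
    by (intro closed_INT ballI closed_coord_eq)
  have c3: "closed (\<Inter>A\<in>Pow I. {x::'a\<Rightarrow>real. (\<Sum>i\<in>A. x i) \<le> z A})"
    by (intro closed_INT ballI closed_sum_le)
  show ?thesis unfolding eq by (intro closed_Int c1 c3 closed_sum_eq)
qed

lemma conv_gen_perm: "conv_set (gen_perm I z)"
  unfolding conv_set_def
proof (intro ballI allI impI)
  fix x y and s :: real
  assume x: "x \<in> gen_perm I z" and y: "y \<in> gen_perm I z" and s: "0 \<le> s" "s \<le> 1"
  have lin: "(\<Sum>i\<in>A. (1-s)*x i + s*y i) = (1-s)*(\<Sum>i\<in>A. x i) + s*(\<Sum>i\<in>A. y i)" for A
    by (simp add: sum.distrib sum_distrib_left)
  show "(\<lambda>i. (1-s)*x i + s*y i) \<in> gen_perm I z"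
    unfolding gen_perm_iff
  proof (intro conjI allI impI)
    fix i assume "i \<notin> I" then show "(1-s)*x i + s*y i = 0" using x y by (simp add: gen_perm_iff)
  next
    show "(\<Sum>i\<in>I. (1-s)*x i + s*y i) = z I" using x y unfolding lin by (simp add: gen_perm_iff algebra_simps)
  next
    fix A assume A: "A \<subseteq> I"
    have "(1-s)*(\<Sum>i\<in>A. x i) \<le> (1-s)* z A" using x A s by (intro mult_left_mono) (auto simp: gen_perm_iff)
    moreover have "s*(\<Sum>i\<in>A. y i) \<le> s* z A" using y A s by (intro mult_left_mono) (auto simp: gen_perm_iff)
    ultimately show "(\<Sum>i\<in>A. (1-s)*x i + s*y i) \<le> z A" unfolding lin by (simp add: algebra_simps)
  qed
qed

definition cubeK :: "'a set \<Rightarrow> 'a set \<Rightarrow> ('a \<Rightarrow> real) \<Rightarrow> real \<Rightarrow> ('a \<Rightarrow> real) set" where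
  "cubeK I S w t = {u. (\<forall>i\<in>I. \<bar>u i - w i\<bar> \<le> t) \<and> (\<forall>i. i \<notin> I \<longrightarrow> u i = w i) \<and>
                       (\<Sum>i\<in>S. w i) + t^2 \<le> (\<Sum>i\<in>S. u i)}"

lemma compact_cubeK: "compact (cubeK I S w t)"
proof -
  define F where "F i = (if i \<in> I then {w i - t..w i + t} else {w i})" for i
  have "compact (PiE UNIV F)"
    using compactin_PiE[of "\<lambda>i. euclidean" UNIV F]
    by (simp add: euclidean_product_topology F_def)
  moreover have "cubeK I S w t = PiE UNIV F \<inter> {u. (\<Sum>i\<in>S. w i) + t^2 \<le> (\<Sum>i\<in>S. u i)}"
    by (auto simp: cubeK_def PiE_iff F_def abs_diff_le_iff split: if_splits)
  ultimately show ?thesis using closed_sum_ge by (metis Int_commute closed_Int_compact)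
qed

lemma conv_cubeK: "conv_set (cubeK I S w t)"
  unfolding conv_set_def
proof (intro ballI allI impI)
  fix x y and s :: real
  assume x: "x \<in> cubeK I S w t" and y: "y \<in> cubeK I S w t" and s: "0 \<le> s" "s \<le> 1"
  have lin: "(\<Sum>i\<in>A. (1-s)*x i + s*y i) = (1-s)*(\<Sum>i\<in>A. x i) + s*(\<Sum>i\<in>A. y i)" for A
    by (simp add: sum.distrib sum_distrib_left)
  show "(\<lambda>i. (1-s)*x i + s*y i) \<in> cubeK I S w t"
    unfolding cubeK_def mem_Collect_eq
  proof (intro conjI ballI allI impI)
    fix i assume "i \<in> I"
    then have a: "\<bar>x i - w i\<bar> \<le> t" "\<bar>y i - w i\<bar> \<le> t" using x y by (auto simp: cubeK_def)
    have "(1-s)*x i + s*y i - w i = (1-s)*(x i - w i) + s*(y i - w i)" by (simp add: algebra_simps)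
    also have "\<bar>\<dots>\<bar> \<le> (1-s)*\<bar>x i - w i\<bar> + s*\<bar>y i - w i\<bar>"
      using s by (metis abs_mult abs_of_nonneg abs_triangle_ineq diff_ge_0_iff_ge)
    also have "\<dots> \<le> (1-s)*t + s*t" using a s by (intro add_mono mult_left_mono) auto
    finally show "\<bar>(1-s)*x i + s*y i - w i\<bar> \<le> t" by (simp add: algebra_simps)
  next
    fix i assume "i \<notin> I"
    then show "(1-s)*x i + s*y i = w i" using x y by (auto simp: cubeK_def algebra_simps)
  next
    have "(1-s)*((\<Sum>i\<in>S. w i) + t^2) \<le> (1-s)*(\<Sum>i\<in>S. x i)" using x s by (intro mult_left_mono) (auto simp: cubeK_def)
    moreover have "s*((\<Sum>i\<in>S. w i) + t^2) \<le> s*(\<Sum>i\<in>S. y i)" using y s by (intro mult_left_mono) (auto simp: cubeK_def)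
    ultimately show "(\<Sum>i\<in>S. w i) + t^2 \<le> (\<Sum>i\<in>S. (1-s)*x i + s*y i)" unfolding lin by (simp add: algebra_simps)
  qed
qed

lemma cubeK_bound:
  assumes "u \<in> cubeK I S w t" "A \<subseteq> I" "finite I"
  shows "\<bar>(\<Sum>i\<in>A. u i) - (\<Sum>i\<in>A. w i)\<bar> \<le> real (card A) * t"
proof -
  have "\<bar>(\<Sum>i\<in>A. u i) - (\<Sum>i\<in>A. w i)\<bar> = \<bar>\<Sum>i\<in>A. u i - w i\<bar>" by (simp add: sum_subtractf)
  also have "\<dots> \<le> (\<Sum>i\<in>A. \<bar>u i - w i\<bar>)" by (rule sum_abs)
  also have "\<dots> \<le> (\<Sum>i\<in>A. t)" using assms by (intro sum_mono) (auto simp: cubeK_def)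
  finally show ?thesis by simp
qed

lemma card_le_I: "finite I \<Longrightarrow> A \<subseteq> I \<Longrightarrow> real (card A) \<le> real (card I)"
  by (simp add: card_mono)

lemma ev_not_in:
  assumes fin: "finite I" and P: "P = gen_perm I z" and w: "w \<notin> P"
  shows "\<exists>b>0. \<forall>t>0. t < b \<longrightarrow> P \<inter> cubeK I S w t = {}"
proof -
  define n where "n = real (card I) + 1"
  have n: "n > 0" by (simp add: n_def add_pos_nonneg)
  have small: "real (card A) * t < d" if "A \<subseteq> I" "0 < t" "t < d / n" "d > 0" for A t d
  proof -
    have "real (card A) * t \<le> real (card I) * t" using card_le_I[OF fin that(1)] that(2) by (intro mult_right_mono) auto
    also have "\<dots> < n * t" using that(2) by (simp add: n_def algebra_simps)
    also have "\<dots> < d" using that(3) n by (simp add: field_simps)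
    finally show ?thesis .
  qed
  consider (out) j where "j \<notin> I" "w j \<noteq> 0" | (tot) "(\<Sum>i\<in>I. w i) \<noteq> z I"
    | (ineq) A where "A \<subseteq> I" "(\<Sum>i\<in>A. w i) > z A"
    using w unfolding P gen_perm_iff by (meson not_le)
  then show ?thesis
  proof cases
    case out
    show ?thesis
    proof (intro exI[of _ 1] conjI allI impI)
      fix t :: real
      show "P \<inter> cubeK I S w t = {}" using out unfolding P by (auto simp: gen_perm_iff cubeK_def)
    qed simp
  next
    case tot
    define d where "d = \<bar>(\<Sum>i\<in>I. w i) - z I\<bar>"
    have d: "d > 0" using tot by (simp add: d_def)
    show ?thesis
    proof (intro exI[of _ "d / n"] conjI allI impI)
      show "d / n > 0" using d n by simp
      fix t :: real assume t: "0 < t" "t < d / n"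
      show "P \<inter> cubeK I S w t = {}"
      proof (rule ccontr)
        assume "P \<inter> cubeK I S w t \<noteq> {}"
        then obtain u where u: "u \<in> P" "u \<in> cubeK I S w t" by auto
        have "\<bar>(\<Sum>i\<in>I. u i) - (\<Sum>i\<in>I. w i)\<bar> < d"
          using cubeK_bound[OF u(2) order_refl fin] small[OF order_refl t d] by linarith
        moreover have "(\<Sum>i\<in>I. u i) = z I" using u(1) unfolding P by (simp add: gen_perm_iff)
        ultimately show False by (simp add: d_def abs_minus_commute)
      qed
    qed
  next
    case ineq
    define d where "d = (\<Sum>i\<in>A. w i) - z A"
    have d: "d > 0" using ineq by (simp add: d_def)
    show ?thesis
    proof (intro exI[of _ "d / n"] conjI allI impI)
      show "d / n > 0" using d n by simp
      fix t :: real assume t: "0 < t" "t < d / n"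
      show "P \<inter> cubeK I S w t = {}"
      proof (rule ccontr)
        assume "P \<inter> cubeK I S w t \<noteq> {}"
        then obtain u where u: "u \<in> P" "u \<in> cubeK I S w t" by auto
        have "\<bar>(\<Sum>i\<in>A. u i) - (\<Sum>i\<in>A. w i)\<bar> < d"
          using cubeK_bound[OF u(2) ineq(1) fin] small[OF ineq(1) t d] by linarith
        moreover have "(\<Sum>i\<in>A. u i) \<le> z A" using u(1) ineq(1) unfolding P by (simp add: gen_perm_iff)
        ultimately show False by (simp add: d_def abs_less_iff)
      qed
    qed
  qed
qed

lemma ev_in_face:
  assumes "w \<in> max_face P S" "t > 0"
  shows "P \<inter> cubeK I S w t = {}"
proof (rule ccontr)
  assume "P \<inter> cubeK I S w t \<noteq> {}"
  then obtain u where u: "u \<in> P" "u \<in> cubeK I S w t" by auto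
  have "(\<Sum>i\<in>S. u i) \<le> (\<Sum>i\<in>S. w i)" using assms(1) u(1) by (auto simp: max_face_def)
  moreover have "(\<Sum>i\<in>S. w i) + t^2 \<le> (\<Sum>i\<in>S. u i)" using u(2) by (simp add: cubeK_def)
  moreover have "t^2 > 0" using assms(2) by simp
  ultimately show False by linarith
qed

lemma ev_in_not_face:
  assumes fin: "finite I" and P: "P = gen_perm I z" and w: "w \<in> P" "w \<notin> max_face P S"
  shows "\<exists>b>0. \<forall>t>0. t < b \<longrightarrow> P \<inter> cubeK I S w t \<noteq> {}"
proof -
  obtain p where p: "p \<in> P" "(\<Sum>i\<in>S. w i) < (\<Sum>i\<in>S. p i)" using w by (auto simp: max_face_def not_le)
  define \<delta> where "\<delta> = (\<Sum>i\<in>S. p i) - (\<Sum>i\<in>S. w i)"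
  define D where "D = (\<Sum>i\<in>I. \<bar>p i - w i\<bar>) + 1"
  have \<delta>: "\<delta> > 0" using p by (simp add: \<delta>_def)
  have D: "D \<ge> 1" by (simp add: D_def sum_nonneg)
  show ?thesis
  proof (intro exI[of _ "min D (\<delta> / D)"] conjI allI impI)
    show "min D (\<delta> / D) > 0" using \<delta> D by simp
    fix t :: real assume t: "0 < t" "t < min D (\<delta> / D)"
    define s where "s = t / D"
    have s: "0 \<le> s" "s \<le> 1" using t D by (auto simp: s_def)
    define u where "u = (\<lambda>i. (1-s)*w i + s*p i)"
    have uP: "u \<in> P" using conv_gen_perm[of I z] w(1) p(1) s unfolding P conv_set_def u_def by blast
    have "u \<in> cubeK I S w t"
      unfolding cubeK_def mem_Collect_eq
    proof (intro conjI ballI allI impI)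
      fix i assume iI: "i \<in> I"
      have "u i - w i = s * (p i - w i)" by (simp add: u_def algebra_simps)
      then have "\<bar>u i - w i\<bar> = s * \<bar>p i - w i\<bar>" using s by (simp add: abs_mult)
      also have "\<dots> \<le> s * D"
      proof -
        have "\<bar>p i - w i\<bar> \<le> (\<Sum>i\<in>I. \<bar>p i - w i\<bar>)"
          using iI fin by (intro member_le_sum) auto
        then show ?thesis using s by (intro mult_left_mono) (auto simp: D_def)
      qed
      also have "s * D = t" using D by (simp add: s_def)
      finally show "\<bar>u i - w i\<bar> \<le> t" .
    next
      fix i assume "i \<notin> I"
      then have "w i = 0" "p i = 0" using w(1) p(1) unfolding P by (auto simp: gen_perm_iff)
      then show "u i = w i" by (simp add: u_def)
    next
      have "(\<Sum>i\<in>S. u i) = (\<Sum>i\<in>S. w i) + s * \<delta>"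
        by (simp add: u_def \<delta>_def sum.distrib sum_distrib_left algebra_simps sum_subtractf)
      moreover have "t^2 \<le> s * \<delta>"
      proof -
        have "t \<le> \<delta> / D" using t by simp
        then have "t * t \<le> t * (\<delta> / D)" using t by (intro mult_left_mono) auto
        then show ?thesis by (simp add: s_def power2_eq_square)
      qed
      ultimately show "(\<Sum>i\<in>S. w i) + t^2 \<le> (\<Sum>i\<in>S. u i)" by simp
    qed
    then show "P \<inter> cubeK I S w t \<noteq> {}" using uP by auto
  qed
qed

lemma face_rel:
  fixes c :: "('a \<Rightarrow> real) set \<Rightarrow> 'k::field"
  assumes fin: "finite I" "finite Q" and GP: "\<forall>P\<in>Q. is_GP I P" and S: "S \<subseteq> I"
    and rel: "\<And>x. (\<Sum>P\<in>Q. c P * ind P x) = 0"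
  shows "(\<Sum>P\<in>Q. c P * ind (max_face P S) w) = 0"
proof -
  have ev: "\<forall>P\<in>Q. eventually (\<lambda>t. (P \<inter> cubeK I S w t \<noteq> {}) \<longleftrightarrow> (w \<in> P \<and> w \<notin> max_face P S)) (at_right 0)"
  proof
    fix P assume "P \<in> Q"
    then obtain z where z: "P = gen_perm I z" using GP by (auto simp: is_GP_def)
    show "eventually (\<lambda>t. (P \<inter> cubeK I S w t \<noteq> {}) \<longleftrightarrow> (w \<in> P \<and> w \<notin> max_face P S)) (at_right 0)"
      unfolding eventually_at_right_field
    proof (cases "w \<in> P")
      case False
      then obtain b where "b > 0" "\<forall>t>0. t < b \<longrightarrow> P \<inter> cubeK I S w t = {}"
        using ev_not_in[OF fin(1) z] by blast
      then show "\<exists>b>0. \<forall>y>0. y < b \<longrightarrow> (P \<inter> cubeK I S w y \<noteq> {}) = (w \<in> P \<and> w \<notin> max_face P S)"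
        using False by blast
    next
      case True
      show "\<exists>b>0. \<forall>y>0. y < b \<longrightarrow> (P \<inter> cubeK I S w y \<noteq> {}) = (w \<in> P \<and> w \<notin> max_face P S)"
      proof (cases "w \<in> max_face P S")
        case True
        then show ?thesis using ev_in_face[OF True] by (intro exI[of _ 1]) auto
      next
        case False
        then obtain b where "b > 0" "\<forall>t>0. t < b \<longrightarrow> P \<inter> cubeK I S w t \<noteq> {}"
          using ev_in_not_face[OF fin(1) z \<open>w\<in>P\<close>] by blast
        then show ?thesis using False \<open>w\<in>P\<close> by blast
      qed
    qed
  qed
  have "eventually (\<lambda>t. t > 0 \<and> (\<forall>P\<in>Q. (P \<inter> cubeK I S w t \<noteq> {}) \<longleftrightarrow> (w \<in> P \<and> w \<notin> max_face P S))) (at_right (0::real))"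
    using eventually_at_right_less eventually_ball_finite[OF fin(2) ev] by (rule eventually_conj)
  from eventually_happens'[OF trivial_limit_at_right_real this]
  obtain t where t: "t > 0" "\<forall>P\<in>Q. (P \<inter> cubeK I S w t \<noteq> {}) \<longleftrightarrow> (w \<in> P \<and> w \<notin> max_face P S)"
    by blast
  have E: "(\<Sum>P\<in>{P\<in>Q. P \<inter> cubeK I S w t \<noteq> {}}. c P) = 0"
  proof (rule euler[of I Q "\<lambda>P. P \<inter> cubeK I S w t" w c])
    show "finite I" "finite Q" by (rule fin)+
    fix P assume "P \<in> Q"
    then obtain z where z: "P = gen_perm I z" using GP by (auto simp: is_GP_def)
    show "compact (P \<inter> cubeK I S w t) \<and> conv_set (P \<inter> cubeK I S w t) \<and>
          P \<inter> cubeK I S w t \<subseteq> {u. \<forall>j. j \<notin> I \<longrightarrow> u j = w j}"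
      unfolding z
      by (intro conjI closed_Int_compact closed_gen_perm compact_cubeK conv_set_Int conv_gen_perm conv_cubeK)
         (auto simp: cubeK_def)
  next
    fix u
    have "(\<Sum>P\<in>Q. c P * ind (P \<inter> cubeK I S w t) u) = (if u \<in> cubeK I S w t then (\<Sum>P\<in>Q. c P * ind P u) else 0)"
      by (simp add: ind_def)
    then show "(\<Sum>P\<in>Q. c P * ind (P \<inter> cubeK I S w t) u) = 0" using rel by simp
  qed
  have "(\<Sum>P\<in>Q. c P * ind (max_face P S) w) = (\<Sum>P\<in>Q. c P * ind P w) - (\<Sum>P\<in>Q. if P \<inter> cubeK I S w t \<noteq> {} then c P else 0)"
    unfolding sum_subtractf[symmetric]
  proof (rule sum.cong[OF refl])
    fix P assume "P \<in> Q"
    have "max_face P S \<subseteq> P" by (auto simp: max_face_def)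
    then show "c P * ind (max_face P S) w = c P * ind P w - (if P \<inter> cubeK I S w t \<noteq> {} then c P else 0)"
      using t(2) \<open>P\<in>Q\<close> by (auto simp: ind_def)
  qed
  also have "(\<Sum>P\<in>Q. if P \<inter> cubeK I S w t \<noteq> {} then c P else 0) = (\<Sum>P\<in>{P\<in>Q. P \<inter> cubeK I S w t \<noteq> {}}. c P)"
    by (simp add: sum.inter_filter[OF fin(2)])
  finally show ?thesis using E rel by simp
qed

definition resp :: "('a set \<Rightarrow> ('a \<Rightarrow> real) set set) \<Rightarrow> 'a set \<Rightarrow> (('a \<Rightarrow> real) set \<Rightarrow> 'k::field) \<Rightarrow> bool" where
  "resp F J g \<longleftrightarrow> (\<forall>Q c. finite Q \<longrightarrow> Q \<subseteq> F J \<longrightarrow> (\<forall>x. (\<Sum>P\<in>Q. c P * ind P x) = (0::'k)) \<longrightarrow>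
                         (\<Sum>P\<in>Q. c P * g P) = 0)"

lemma sum_group_coeff:
  fixes c :: "'b \<Rightarrow> 'k::comm_ring_1"
  assumes "finite K"
  shows "(\<Sum>k\<in>K. c k * h (P k)) = (\<Sum>Q\<in>P ` K. (\<Sum>k\<in>{k\<in>K. P k = Q}. c k) * h Q)"
proof -
  have "(\<Sum>k\<in>K. c k * h (P k)) = (\<Sum>Q\<in>P ` K. \<Sum>k\<in>{k\<in>K. P k = Q}. c k * h (P k))"
    using sum.image_gen[OF assms] .
  also have "\<dots> = (\<Sum>Q\<in>P ` K. (\<Sum>k\<in>{k\<in>K. P k = Q}. c k) * h Q)"
    by (intro sum.cong refl) (simp add: sum_distrib_right)
  finally show ?thesis .
qed

lemma resp_gen:
  fixes c :: "'b \<Rightarrow> 'k::field"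
  assumes "resp F J g" "finite K" "\<And>k. k\<in>K \<Longrightarrow> P k \<in> F J"
    and "\<And>x. (\<Sum>k\<in>K. c k * ind (P k) x) = 0"
  shows "(\<Sum>k\<in>K. c k * g (P k)) = 0"
proof -
  define d where "d Q = (\<Sum>k\<in>{k\<in>K. P k = Q}. c k)" for Q
  have "(\<Sum>Q\<in>P ` K. d Q * ind Q x) = 0" for x
    using assms(4)[of x] sum_group_coeff[OF assms(2), of c "\<lambda>Q. ind Q x" P] by (simp add: d_def)
  then have "(\<Sum>Q\<in>P ` K. d Q * g Q) = 0"
    using assms(1,2,3) unfolding resp_def by blast
  then show ?thesis using sum_group_coeff[OF assms(2), of c g P] by (simp add: d_def)
qed

lemma sv_imp_resp:
  fixes g :: "('a \<Rightarrow> real) set \<Rightarrow> 'k::field"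
  assumes "strong_valuation F J (*) g"
  shows "resp F J g"
  unfolding resp_def
proof (intro allI impI)
  fix Q and c :: "('a \<Rightarrow> real) set \<Rightarrow> 'k" assume Q: "finite Q" "Q \<subseteq> F J" and rel: "\<forall>x. (\<Sum>P\<in>Q. c P * ind P x) = 0"
  obtain fh where lin: "\<forall>u\<in>ind_span F J. \<forall>v\<in>ind_span F J. \<forall>a b. fh (\<lambda>x. a * u x + b * v x) = a * fh u + b * fh v"
    and g: "\<forall>P\<in>F J. g P = fh (ind P)" using assms unfolding strong_valuation_def by blast
  have zsp: "(\<lambda>x. 0) \<in> ind_span F J" unfolding ind_span_def by (rule CollectI, rule exI[of _ "{}"]) auto
  have fh0: "fh (\<lambda>x. 0) = 0" using lin[rule_format, OF zsp zsp, of 0 0] by simp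
  have indsp: "ind P \<in> ind_span F J" if "P \<in> F J" for P
    unfolding ind_span_def using that by (auto intro!: exI[of _ "{P}"] exI[of _ "\<lambda>_. 1"])
  have span_sum: "(\<lambda>x. \<Sum>P\<in>Q'. c P * ind P x) \<in> ind_span F J" if "finite Q'" "Q' \<subseteq> F J" for Q'
    unfolding ind_span_def using that by blast
  have key: "finite Q' \<Longrightarrow> Q' \<subseteq> Q \<Longrightarrow> fh (\<lambda>x. \<Sum>P\<in>Q'. c P * ind P x) = (\<Sum>P\<in>Q'. c P * g P)" for Q'
  proof (induction Q' rule: finite_induct)
    case empty
    then show ?case using fh0 by simp
  next
    case (insert P Q')
    have PF: "P \<in> F J" and QF: "Q' \<subseteq> F J" using insert.prems Q(2) by auto
    have "fh (\<lambda>x. \<Sum>R\<in>insert P Q'. c R * ind R x) = fh (\<lambda>x. c P * ind P x + 1 * (\<Sum>R\<in>Q'. c R * ind R x))"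
      using insert.hyps by simp
    also have "\<dots> = c P * fh (ind P) + 1 * fh (\<lambda>x. \<Sum>R\<in>Q'. c R * ind R x)"
      using lin[rule_format, OF indsp[OF PF] span_sum[OF insert.hyps(1) QF], of "c P" 1] by simp
    also have "\<dots> = c P * g P + (\<Sum>R\<in>Q'. c R * g R)"
      using insert.IH insert.prems g PF by simp
    finally show ?case using insert.hyps by simp
  qed
  have "(\<Sum>P\<in>Q. c P * g P) = fh (\<lambda>x. \<Sum>P\<in>Q. c P * ind P x)" using key[OF Q(1) order_refl] by simp
  also have "(\<lambda>x. \<Sum>P\<in>Q. c P * ind P x) = (\<lambda>x. 0)" using rel by simp
  finally show "(\<Sum>P\<in>Q. c P * g P) = 0" using fh0 by simp
qed

definition ext_val :: "('a set \<Rightarrow> ('a \<Rightarrow> real) set set) \<Rightarrow> 'a set \<Rightarrow> (('a \<Rightarrow> real) set \<Rightarrow> 'k::field) \<Rightarrow> (('a \<Rightarrow> real) \<Rightarrow> 'k) \<Rightarrow> 'k" where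
  "ext_val F J g u = (THE v. \<exists>Q c. finite Q \<and> Q \<subseteq> F J \<and> u = (\<lambda>x. \<Sum>P\<in>Q. c P * ind P x) \<and> v = (\<Sum>P\<in>Q. c P * g P))"

lemma sum_ext0:
  fixes c :: "'b \<Rightarrow> 'k::comm_ring_1"
  assumes "finite Q" "Q1 \<subseteq> Q"
  shows "(\<Sum>P\<in>Q. (if P \<in> Q1 then c P else 0) * h P) = (\<Sum>P\<in>Q1. c P * h P)"
proof -
  have "(\<Sum>P\<in>Q. (if P \<in> Q1 then c P else 0) * h P) = (\<Sum>P\<in>Q. if P \<in> Q1 then c P * h P else 0)"
    by (intro sum.cong) auto
  also have "\<dots> = (\<Sum>P\<in>{P\<in>Q. P \<in> Q1}. c P * h P)" by (rule sum.inter_filter[OF assms(1), symmetric])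
  also have "{P\<in>Q. P \<in> Q1} = Q1" using assms(2) by auto
  finally show ?thesis .
qed

lemma resp_wd:
  fixes c1 c2 :: "('a \<Rightarrow> real) set \<Rightarrow> 'k::field"
  assumes "resp F J g" "finite Q1" "Q1 \<subseteq> F J" "finite Q2" "Q2 \<subseteq> F J"
    and "(\<lambda>x. \<Sum>P\<in>Q1. c1 P * ind P x) = (\<lambda>x. \<Sum>P\<in>Q2. c2 P * ind P x)"
  shows "(\<Sum>P\<in>Q1. c1 P * g P) = (\<Sum>P\<in>Q2. c2 P * g P)"
proof -
  define Q where "Q = Q1 \<union> Q2"
  define c where "c P = (if P \<in> Q1 then c1 P else 0) - (if P \<in> Q2 then c2 P else 0)" for P
  have fQ: "finite Q" using assms by (simp add: Q_def)
  have split: "(\<Sum>P\<in>Q. c P * h P) = (\<Sum>P\<in>Q1. c1 P * h P) - (\<Sum>P\<in>Q2. c2 P * h P)" for h :: "_ \<Rightarrow> 'k"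
  proof -
    have "(\<Sum>P\<in>Q. c P * h P) = (\<Sum>P\<in>Q. (if P \<in> Q1 then c1 P else 0) * h P) - (\<Sum>P\<in>Q. (if P \<in> Q2 then c2 P else 0) * h P)"
      by (simp only: c_def left_diff_distrib sum_subtractf)
    also have "\<dots> = (\<Sum>P\<in>Q1. c1 P * h P) - (\<Sum>P\<in>Q2. c2 P * h P)"
      using sum_ext0[OF fQ, of Q1 c1 h] sum_ext0[OF fQ, of Q2 c2 h] by (simp add: Q_def)
    finally show ?thesis .
  qed
  have "\<forall>x. (\<Sum>P\<in>Q. c P * ind P x) = 0"
  proof
    fix x
    have "(\<Sum>P\<in>Q1. c1 P * ind P x) = (\<Sum>P\<in>Q2. c2 P * ind P x)" using fun_cong[OF assms(6), of x] by simp
    then show "(\<Sum>P\<in>Q. c P * ind P x) = 0" using split[of "\<lambda>P. ind P x"] by simp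
  qed
  then have "(\<Sum>P\<in>Q. c P * g P) = 0" using assms(1) fQ assms(3,5) unfolding resp_def Q_def by blast
  then show ?thesis using split[of g] by simp
qed

lemma ext_val_eq:
  assumes "resp F J g" "finite Q" "Q \<subseteq> F J" "u = (\<lambda>x. \<Sum>P\<in>Q. c P * ind P x)"
  shows "ext_val F J g u = (\<Sum>P\<in>Q. c P * g P)"
  unfolding ext_val_def
proof (rule the_equality)
  show "\<exists>Q' c'. finite Q' \<and> Q' \<subseteq> F J \<and> u = (\<lambda>x. \<Sum>P\<in>Q'. c' P * ind P x) \<and> (\<Sum>P\<in>Q. c P * g P) = (\<Sum>P\<in>Q'. c' P * g P)"
    using assms by blast
next
  fix v assume "\<exists>Q' c'. finite Q' \<and> Q' \<subseteq> F J \<and> u = (\<lambda>x. \<Sum>P\<in>Q'. c' P * ind P x) \<and> v = (\<Sum>P\<in>Q'. c' P * g P)"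
  then obtain Q' c' where "finite Q'" "Q' \<subseteq> F J" "u = (\<lambda>x. \<Sum>P\<in>Q'. c' P * ind P x)" "v = (\<Sum>P\<in>Q'. c' P * g P)"
    by blast
  then have "(\<Sum>P\<in>Q'. c' P * g P) = (\<Sum>P\<in>Q. c P * g P)"
    using resp_wd[OF assms(1), of Q' Q c' c] assms(2,3,4) by simp
  then show "v = (\<Sum>P\<in>Q. c P * g P)" using \<open>v = _\<close> by simp
qed

lemma ext_val_lin:
  assumes "resp F J g" "u \<in> ind_span F J" "v \<in> ind_span F J"
  shows "ext_val F J g (\<lambda>x. a * u x + b * v x) = a * ext_val F J g u + b * ext_val F J g v"
proof -
  obtain Q1 c1 where 1: "finite Q1" "Q1 \<subseteq> F J" "u = (\<lambda>x. \<Sum>P\<in>Q1. c1 P * ind P x)"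
    using assms(2) unfolding ind_span_def by blast
  obtain Q2 c2 where 2: "finite Q2" "Q2 \<subseteq> F J" "v = (\<lambda>x. \<Sum>P\<in>Q2. c2 P * ind P x)"
    using assms(3) unfolding ind_span_def by blast
  define Q where "Q = Q1 \<union> Q2"
  define c where "c P = a * (if P \<in> Q1 then c1 P else 0) + b * (if P \<in> Q2 then c2 P else 0)" for P
  have fQ: "finite Q" using 1 2 by (simp add: Q_def)
  have split: "(\<Sum>P\<in>Q. c P * h P) = a * (\<Sum>P\<in>Q1. c1 P * h P) + b * (\<Sum>P\<in>Q2. c2 P * h P)" for h
  proof -
    have "(\<Sum>P\<in>Q. c P * h P) = a * (\<Sum>P\<in>Q. (if P \<in> Q1 then c1 P else 0) * h P) + b * (\<Sum>P\<in>Q. (if P \<in> Q2 then c2 P else 0) * h P)"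
      by (simp only: c_def distrib_right mult.assoc sum.distrib sum_distrib_left[symmetric])
    also have "\<dots> = a * (\<Sum>P\<in>Q1. c1 P * h P) + b * (\<Sum>P\<in>Q2. c2 P * h P)"
      using sum_ext0[OF fQ, of Q1 c1 h] sum_ext0[OF fQ, of Q2 c2 h] by (simp add: Q_def)
    finally show ?thesis .
  qed
  have "(\<lambda>x. a * u x + b * v x) = (\<lambda>x. \<Sum>P\<in>Q. c P * ind P x)"
  proof
    fix x show "a * u x + b * v x = (\<Sum>P\<in>Q. c P * ind P x)"
      using split[of "\<lambda>P. ind P x"] 1(3) 2(3) by simp
  qed
  then have "ext_val F J g (\<lambda>x. a * u x + b * v x) = (\<Sum>P\<in>Q. c P * g P)"
    using ext_val_eq[OF assms(1) fQ] 1 2 by (simp add: Q_def)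
  also have "\<dots> = a * ext_val F J g u + b * ext_val F J g v"
    using split[of g] ext_val_eq[OF assms(1) 1(1,2,3)] ext_val_eq[OF assms(1) 2(1,2,3)] by simp
  finally show ?thesis .
qed

lemma ext_val_ind:
  assumes "resp F J g" "P \<in> F J"
  shows "ext_val F J g (ind P) = g P"
proof -
  have "ind P = (\<lambda>x. \<Sum>R\<in>{P}. (\<lambda>_. 1) R * ind R x)" by simp
  then show ?thesis using ext_val_eq[OF assms(1), of "{P}" "ind P" "\<lambda>_. 1"] assms(2) by simp
qed

lemma sv_fun:
  fixes g :: "'c \<Rightarrow> ('a \<Rightarrow> real) set \<Rightarrow> 'k::field"
  assumes "\<And>\<alpha>. resp F J (\<lambda>P. g \<alpha> P)"
  shows "strong_valuation F J (\<lambda>a h. \<lambda>\<alpha>. a * h \<alpha>) (\<lambda>P. \<lambda>\<alpha>. g \<alpha> P)"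
  unfolding strong_valuation_def
proof (intro exI[of _ "\<lambda>u. \<lambda>\<alpha>. ext_val F J (g \<alpha>) u"] conjI ballI allI)
  fix u v :: "('a \<Rightarrow> real) \<Rightarrow> 'k" and a b :: 'k assume "u \<in> ind_span F J" "v \<in> ind_span F J"
  then show "(\<lambda>\<alpha>. ext_val F J (g \<alpha>) (\<lambda>x. a * u x + b * v x)) =
       (\<lambda>\<alpha>. a * ext_val F J (g \<alpha>) u) + (\<lambda>\<alpha>. b * ext_val F J (g \<alpha>) v)"
    using ext_val_lin[OF assms] by (simp add: fun_eq_iff)
next
  fix P assume "P \<in> F J"
  then show "(\<lambda>\<alpha>. g \<alpha> P) = (\<lambda>\<alpha>. ext_val F J (g \<alpha>) (ind P))"
    using ext_val_ind[OF assms] by simp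
qed

lemma smult_sum_right: "smult a (\<Sum>j\<in>S. f j) = (\<Sum>j\<in>S. smult a (f j))"
  by (induction S rule: infinite_finite_induct) (auto simp: smult_add_right)

lemma sv_poly:
  fixes cc :: "nat \<Rightarrow> ('a \<Rightarrow> real) set \<Rightarrow> 'k::field"
  assumes "\<And>j. resp F J (cc j)" "\<And>P. P \<in> F J \<Longrightarrow> f P = (\<Sum>j\<le>N. smult (cc j P) (B j))"
  shows "strong_valuation F J smult f"
  unfolding strong_valuation_def
proof (intro exI[of _ "\<lambda>u. \<Sum>j\<le>N. smult (ext_val F J (cc j) u) (B j)"] conjI ballI allI)
  fix u v :: "('a \<Rightarrow> real) \<Rightarrow> 'k" and a b :: 'k assume "u \<in> ind_span F J" "v \<in> ind_span F J"
  then show "(\<Sum>j\<le>N. smult (ext_val F J (cc j) (\<lambda>x. a * u x + b * v x)) (B j)) =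
       smult a (\<Sum>j\<le>N. smult (ext_val F J (cc j) u) (B j)) + smult b (\<Sum>j\<le>N. smult (ext_val F J (cc j) v) (B j))"
    using ext_val_lin[OF assms(1)] by (simp add: smult_sum_right smult_smult smult_add_left sum.distrib)
next
  fix P assume "P \<in> F J"
  then show "f P = (\<Sum>j\<le>N. smult (ext_val F J (cc j) (ind P)) (B j))"
    using ext_val_ind[OF assms(1)] assms(2) by simp
qed

lemma resp_sum:
  fixes g :: "'c \<Rightarrow> ('a \<Rightarrow> real) set \<Rightarrow> 'k::field"
  assumes "finite T" "\<And>s. s \<in> T \<Longrightarrow> resp F J (g s)"
  shows "resp F J (\<lambda>P. \<Sum>s\<in>T. g s P)"
  unfolding resp_def
proof (intro allI impI)
  fix Q and c :: "('a \<Rightarrow> real) set \<Rightarrow> 'k" assume H: "finite Q" "Q \<subseteq> F J" "\<forall>x. (\<Sum>P\<in>Q. c P * ind P x) = 0"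
  have "(\<Sum>P\<in>Q. c P * (\<Sum>s\<in>T. g s P)) = (\<Sum>s\<in>T. \<Sum>P\<in>Q. c P * g s P)"
    by (simp add: sum_distrib_left sum.swap[of _ Q])
  also have "\<dots> = 0" using assms(2) H unfolding resp_def by (intro sum.neutral) blast
  finally show "(\<Sum>P\<in>Q. c P * (\<Sum>s\<in>T. g s P)) = 0" .
qed

lemma resp_zero: "resp F J (\<lambda>P. 0)"
  unfolding resp_def by simp

fun dec :: "'a set \<Rightarrow> 'a set list \<Rightarrow> bool" where
  "dec I [] = (I = {})"
| "dec I (S # Ss) = (S \<subseteq> I \<and> dec (I - S) Ss)"

definition pdisj :: "'a set list \<Rightarrow> bool" where
  "pdisj Ss \<longleftrightarrow> (\<forall>i<length Ss. \<forall>j<length Ss. i \<noteq> j \<longrightarrow> Ss ! i \<inter> Ss ! j = {})"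

lemma pdisj_Nil [simp]: "pdisj []" by (simp add: pdisj_def)

lemma pdisj_Cons: "pdisj (S # Ss) \<longleftrightarrow> (\<forall>T\<in>set Ss. S \<inter> T = {}) \<and> pdisj Ss"
proof
  assume H: "pdisj (S # Ss)"
  have "\<forall>T\<in>set Ss. S \<inter> T = {}"
  proof
    fix T assume "T \<in> set Ss"
    then obtain j where j: "j < length Ss" "Ss ! j = T" by (auto simp: in_set_conv_nth)
    then show "S \<inter> T = {}" using H unfolding pdisj_def
      by (metis Suc_less_eq length_Cons nat.distinct(1) nth_Cons_0 nth_Cons_Suc zero_less_Suc)
  qed
  moreover have "pdisj Ss" unfolding pdisj_def
  proof (intro allI impI)
    fix i j assume "i < length Ss" "j < length Ss" "i \<noteq> j"
    then show "Ss ! i \<inter> Ss ! j = {}" using H unfolding pdisj_def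
      by (metis Suc_inject Suc_less_eq length_Cons nth_Cons_Suc)
  qed
  ultimately show "(\<forall>T\<in>set Ss. S \<inter> T = {}) \<and> pdisj Ss" by blast
next
  assume H: "(\<forall>T\<in>set Ss. S \<inter> T = {}) \<and> pdisj Ss"
  show "pdisj (S # Ss)" unfolding pdisj_def
  proof (intro allI impI)
    fix i j assume ij: "i < length (S # Ss)" "j < length (S # Ss)" "i \<noteq> j"
    show "(S # Ss) ! i \<inter> (S # Ss) ! j = {}"
    proof (cases i)
      case 0
      then obtain j' where "j = Suc j'" using ij by (cases j) auto
      then show ?thesis using 0 ij H by (auto simp: nth_mem)
    next
      case (Suc i')
      show ?thesis
      proof (cases j)
        case 0
        then show ?thesis using Suc ij H by (auto simp: nth_mem)
      next
        case (Suc j')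
        then show ?thesis using \<open>i = Suc i'\<close> ij H unfolding pdisj_def by auto
      qed
    qed
  qed
qed

lemma set_decomps_iff: "Ss \<in> set_decomps I k \<longleftrightarrow> length Ss = k \<and> \<Union>(set Ss) = I \<and> pdisj Ss"
  by (auto simp: set_decomps_def pdisj_def)

lemma dec_iff: "dec I Ss \<longleftrightarrow> \<Union>(set Ss) = I \<and> pdisj Ss"
proof (induction Ss arbitrary: I)
  case Nil
  then show ?case by auto
next
  case (Cons S Ss)
  show ?case
  proof
    assume "dec I (S # Ss)"
    then have "S \<subseteq> I" "\<Union>(set Ss) = I - S" "pdisj Ss" using Cons.IH by auto
    then show "\<Union>(set (S # Ss)) = I \<and> pdisj (S # Ss)" by (auto simp: pdisj_Cons)
  next
    assume H: "\<Union>(set (S # Ss)) = I \<and> pdisj (S # Ss)"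
    then have "S \<subseteq> I" "pdisj Ss" "\<forall>T\<in>set Ss. S \<inter> T = {}" by (auto simp: pdisj_Cons)
    moreover have "\<Union>(set Ss) = I - S" using H calculation(3) by auto
    ultimately show "dec I (S # Ss)" using Cons.IH by auto
  qed
qed

lemma set_decomps_dec: "Ss \<in> set_decomps I k \<longleftrightarrow> length Ss = k \<and> dec I Ss"
  by (simp add: set_decomps_iff dec_iff)

lemma zeta_tensor_Nil [simp]: "zeta_tensor \<zeta> [] P = 1"
  by (simp add: zeta_tensor_def)

lemma zeta_tensor_Cons [simp]: "zeta_tensor \<zeta> (S # Ss) P = \<zeta> S (restr P S) * zeta_tensor \<zeta> Ss (contr P S)"
  by (simp add: zeta_tensor_def)

lemma gp_empty: "is_GP {} P \<Longrightarrow> P = {\<lambda>_. 0}"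
  by (auto simp: is_GP_def gen_perm_def submodular_on_def)

lemma hopfD1: "hopf_subGP F \<Longrightarrow> finite I \<Longrightarrow> P \<in> F I \<Longrightarrow> is_GP I P"
proof -
  assume "hopf_subGP F"
  then have H: "\<forall>I. finite I \<longrightarrow> (\<forall>P\<in>F I. is_GP I P)" unfolding hopf_subGP_def by (elim conjE) assumption
  then show "finite I \<Longrightarrow> P \<in> F I \<Longrightarrow> is_GP I P" by (simp add: H)
qed

lemma hopfD2: "hopf_subGP F \<Longrightarrow> finite I \<Longrightarrow> S \<subseteq> I \<Longrightarrow> P \<in> F I \<Longrightarrow> restr P S \<in> F S \<and> contr P S \<in> F (I - S)"
proof -
  assume "hopf_subGP F"
  then have H: "\<forall>I S P. finite I \<longrightarrow> S \<subseteq> I \<longrightarrow> P \<in> F I \<longrightarrow> restr P S \<in> F S \<and> contr P S \<in> F (I - S)"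
    unfolding hopf_subGP_def by (elim conjE) assumption
  show "finite I \<Longrightarrow> S \<subseteq> I \<Longrightarrow> P \<in> F I \<Longrightarrow> restr P S \<in> F S \<and> contr P S \<in> F (I - S)"
    using H[rule_format, of I S P] by simp
qed

lemma hopfD:
  assumes "hopf_subGP F"
  shows "\<And>I P. finite I \<Longrightarrow> P \<in> F I \<Longrightarrow> is_GP I P"
    and "\<And>I S P. finite I \<Longrightarrow> S \<subseteq> I \<Longrightarrow> P \<in> F I \<Longrightarrow> restr P S \<in> F S"
    and "\<And>I S P. finite I \<Longrightarrow> S \<subseteq> I \<Longrightarrow> P \<in> F I \<Longrightarrow> contr P S \<in> F (I - S)"
  using hopfD1[OF assms] hopfD2[OF assms] by auto

lemma resp_const_empty:
  assumes "hopf_subGP F"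
  shows "resp F {} (\<lambda>P. 1)"
  unfolding resp_def
proof (intro allI impI)
  fix Q and c :: "('a \<Rightarrow> real) set \<Rightarrow> 'k::field" assume H: "finite Q" "Q \<subseteq> F {}" "\<forall>x. (\<Sum>P\<in>Q. c P * ind P x) = 0"
  have "\<And>P. P \<in> Q \<Longrightarrow> P = {\<lambda>_. 0}" using H(2) hopfD(1)[OF assms, of "{}"] gp_empty by blast
  then have "(\<Sum>P\<in>Q. c P * ind P (\<lambda>_. 0)) = (\<Sum>P\<in>Q. c P * 1)"
    by (intro sum.cong) (auto simp: ind_def)
  then show "(\<Sum>P\<in>Q. c P * 1) = 0" using H(3) by simp
qed

lemma restr_elem: "a \<in> restr P S \<Longrightarrow> i \<notin> S \<Longrightarrow> a i = 0"
  by (auto simp: restr_def)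

lemma contr_elem: "b \<in> contr P S \<Longrightarrow> i \<in> S \<Longrightarrow> b i = 0"
  by (auto simp: contr_def)

lemma zt_resp:
  fixes \<zeta> :: "'a set \<Rightarrow> ('a \<Rightarrow> real) set \<Rightarrow> 'k::field"
  assumes hopf: "hopf_subGP F" and zr: "\<And>J. finite J \<Longrightarrow> resp F J (\<zeta> J)"
  shows "finite I \<Longrightarrow> dec I Ss \<Longrightarrow> resp F I (zeta_tensor \<zeta> Ss)"
proof (induction Ss arbitrary: I)
  case Nil
  then show ?case using resp_const_empty[OF hopf] by simp
next
  case (Cons S Ss)
  have SI: "S \<subseteq> I" and dSs: "dec (I - S) Ss" using Cons.prems by auto
  have finS: "finite S" using SI Cons.prems(1) finite_subset by auto
  have IH: "resp F (I - S) (zeta_tensor \<zeta> Ss)" using Cons.IH[OF _ dSs] Cons.prems(1) by simp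
  show ?case
    unfolding resp_def
  proof (intro allI impI)
    fix Q and c :: "('a \<Rightarrow> real) set \<Rightarrow> 'k"
    assume Q: "finite Q" "Q \<subseteq> F I" and rel: "\<forall>x. (\<Sum>P\<in>Q. c P * ind P x) = 0"
    have GP: "\<forall>P\<in>Q. is_GP I P" using Q(2) hopfD(1)[OF hopf Cons.prems(1)] by blast
    have step1: "(\<Sum>P\<in>Q. c P * ind (max_face P S) w) = 0" for w
      using face_rel[OF Cons.prems(1) Q(1) GP SI] rel by blast
    have step2: "(\<Sum>P\<in>Q. (c P * ind (contr P S) b) * ind (restr P S) a) = 0" for a b
    proof (cases "(\<forall>i. i \<notin> S \<longrightarrow> a i = 0) \<and> (\<forall>i\<in>S. b i = 0)")
      case True
      have "(\<Sum>P\<in>Q. (c P * ind (contr P S) b) * ind (restr P S) a) = (\<Sum>P\<in>Q. c P * ind (max_face P S) (mix S a b))"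
      proof (rule sum.cong[OF refl])
        fix P assume "P \<in> Q"
        then obtain z where z: "P = gen_perm I z" "submodular_on I z" using GP by (auto simp: is_GP_def)
        have "(a \<in> restr P S \<and> b \<in> contr P S) \<longleftrightarrow> mix S a b \<in> max_face P S"
          using prodchar[OF Cons.prems(1) z(2) SI, of a b] True unfolding z(1) by blast
        then show "(c P * ind (contr P S) b) * ind (restr P S) a = c P * ind (max_face P S) (mix S a b)"
          by (auto simp: ind_def)
      qed
      then show ?thesis using step1 by simp
    next
      case False
      have z: "ind (contr P S) b = (0::'k) \<or> ind (restr P S) a = (0::'k)" for P
      proof (cases "\<forall>i. i \<notin> S \<longrightarrow> a i = 0")
        case True
        then obtain i where "i \<in> S" "b i \<noteq> 0" using False by blast
        then have "b \<notin> contr P S" using contr_elem[of b P S i] by auto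
        then show ?thesis by (simp add: ind_def)
      next
        case F2: False
        then obtain i where "i \<notin> S" "a i \<noteq> 0" by blast
        then have "a \<notin> restr P S" using restr_elem[of a P S i] by auto
        then show ?thesis by (simp add: ind_def)
      qed
      show ?thesis
      proof (rule sum.neutral, rule ballI)
        fix P assume "P \<in> Q"
        show "c P * ind (contr P S) b * ind (restr P S) a = 0" using z[of P] by auto
      qed
    qed
    have step3: "(\<Sum>P\<in>Q. (c P * ind (contr P S) b) * \<zeta> S (restr P S)) = 0" for b
      by (rule resp_gen[OF zr[OF finS] Q(1)]) (use Q(2) hopfD(2)[OF hopf Cons.prems(1) SI] step2 in auto)
    have step4: "(\<Sum>P\<in>Q. (c P * \<zeta> S (restr P S)) * zeta_tensor \<zeta> Ss (contr P S)) = 0"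
    proof (rule resp_gen[OF IH Q(1)])
      show "\<And>P. P \<in> Q \<Longrightarrow> contr P S \<in> F (I - S)" using Q(2) hopfD(3)[OF hopf Cons.prems(1) SI] by auto
      fix b
      show "(\<Sum>P\<in>Q. c P * \<zeta> S (restr P S) * ind (contr P S) b) = 0"
        using step3[of b] by (simp add: mult.assoc mult.commute mult.left_commute)
    qed
    then show "(\<Sum>P\<in>Q. c P * zeta_tensor \<zeta> (S # Ss) P) = 0"
      by (simp add: mult.assoc)
  qed
qed

lemma finite_set_decomps: "finite I \<Longrightarrow> finite (set_decomps I k)"
proof -
  assume fI: "finite I"
  have "set_decomps I k \<subseteq> {xs. set xs \<subseteq> Pow I \<and> length xs = k}"
    by (auto simp: set_decomps_def)
  moreover have "finite {xs. set xs \<subseteq> Pow I \<and> length xs = k}"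
    using fI by (intro finite_lists_length_eq) simp
  ultimately show ?thesis by (rule finite_subset)
qed

lemma set_decomps_0: "set_decomps I 0 = (if I = {} then {[]} else {})"
  by (auto simp: set_decomps_dec)

lemma set_decomps_Suc:
  "set_decomps I (Suc k) = (\<lambda>(S, Ds). S # Ds) ` (SIGMA S:Pow I. set_decomps (I - S) k)"
proof (rule set_eqI)
  fix Ds
  show "Ds \<in> set_decomps I (Suc k) \<longleftrightarrow> Ds \<in> (\<lambda>(S, Ds). S # Ds) ` (SIGMA S:Pow I. set_decomps (I - S) k)"
  proof
    assume "Ds \<in> set_decomps I (Suc k)"
    then obtain S Ds' where "Ds = S # Ds'" "length Ds' = k" "S \<subseteq> I" "dec (I - S) Ds'"
      by (cases Ds) (auto simp: set_decomps_dec)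
    then show "Ds \<in> (\<lambda>(S, Ds). S # Ds) ` (SIGMA S:Pow I. set_decomps (I - S) k)"
      by (auto simp: set_decomps_dec image_iff)
  next
    assume "Ds \<in> (\<lambda>(S, Ds). S # Ds) ` (SIGMA S:Pow I. set_decomps (I - S) k)"
    then show "Ds \<in> set_decomps I (Suc k)" by (auto simp: set_decomps_dec)
  qed
qed

lemma sum_set_decomps_Suc:
  assumes "finite I"
  shows "(\<Sum>Ds\<in>set_decomps I (Suc k). f Ds) = (\<Sum>S\<in>Pow I. \<Sum>Ds\<in>set_decomps (I - S) k. f (S # Ds))"
proof -
  have inj: "inj_on (\<lambda>(S, Ds). S # Ds) (SIGMA S:Pow I. set_decomps (I - S) k)"
    by (auto simp: inj_on_def)
  have "(\<Sum>Ds\<in>set_decomps I (Suc k). f Ds) = (\<Sum>x\<in>(SIGMA S:Pow I. set_decomps (I - S) k). f (case x of (S, Ds) \<Rightarrow> S # Ds))"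
    unfolding set_decomps_Suc by (rule sum.reindex[OF inj, unfolded comp_def])
  also have "\<dots> = (\<Sum>(S, Ds)\<in>(SIGMA S:Pow I. set_decomps (I - S) k). f (S # Ds))"
    by (rule sum.cong) auto
  also have "\<dots> = (\<Sum>S\<in>Pow I. \<Sum>Ds\<in>set_decomps (I - S) k. f (S # Ds))"
    by (rule sum.Sigma[symmetric]) (use assms in \<open>auto intro: finite_set_decomps\<close>)
  finally show ?thesis .
qed

definition OP :: "'a set \<Rightarrow> nat \<Rightarrow> 'a set list set" where
  "OP I j = {Ss \<in> ord_set_parts I. length Ss = j}"

lemma OP_iff: "Ss \<in> OP I j \<longleftrightarrow> length Ss = j \<and> dec I Ss \<and> (\<forall>S\<in>set Ss. S \<noteq> {})"
  by (auto simp: OP_def ord_set_parts_def set_decomps_dec)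

lemma finite_OP: "finite I \<Longrightarrow> finite (OP I j)"
  by (rule finite_subset[OF _ finite_set_decomps[of I j]]) (auto simp: OP_iff set_decomps_dec)

lemma OP_0: "OP I 0 = (if I = {} then {[]} else {})"
  by (auto simp: OP_iff)

lemma OP_Suc: "OP I (Suc j) = (\<lambda>(S, Ds). S # Ds) ` (SIGMA S:Pow I - {{}}. OP (I - S) j)"
proof (rule set_eqI)
  fix Ds
  show "Ds \<in> OP I (Suc j) \<longleftrightarrow> Ds \<in> (\<lambda>(S, Ds). S # Ds) ` (SIGMA S:Pow I - {{}}. OP (I - S) j)"
  proof
    assume "Ds \<in> OP I (Suc j)"
    then obtain S Ds' where "Ds = S # Ds'" "length Ds' = j" "S \<subseteq> I" "dec (I - S) Ds'" "S \<noteq> {}"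
      "\<forall>T\<in>set Ds'. T \<noteq> {}"
      by (cases Ds) (auto simp: OP_iff)
    then show "Ds \<in> (\<lambda>(S, Ds). S # Ds) ` (SIGMA S:Pow I - {{}}. OP (I - S) j)"
      by (auto simp: OP_iff image_iff)
  next
    assume "Ds \<in> (\<lambda>(S, Ds). S # Ds) ` (SIGMA S:Pow I - {{}}. OP (I - S) j)"
    then show "Ds \<in> OP I (Suc j)" by (auto simp: OP_iff)
  qed
qed

lemma sum_OP_Suc:
  assumes "finite I"
  shows "(\<Sum>Ds\<in>OP I (Suc j). f Ds) = (\<Sum>S\<in>Pow I - {{}}. \<Sum>Ds\<in>OP (I - S) j. f (S # Ds))"
proof -
  have inj: "inj_on (\<lambda>(S, Ds). S # Ds) (SIGMA S:Pow I - {{}}. OP (I - S) j)"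
    by (auto simp: inj_on_def)
  have "(\<Sum>Ds\<in>OP I (Suc j). f Ds) = (\<Sum>x\<in>(SIGMA S:Pow I - {{}}. OP (I - S) j). f (case x of (S, Ds) \<Rightarrow> S # Ds))"
    unfolding OP_Suc by (rule sum.reindex[OF inj, unfolded comp_def])
  also have "\<dots> = (\<Sum>(S, Ds)\<in>(SIGMA S:Pow I - {{}}. OP (I - S) j). f (S # Ds))"
    by (rule sum.cong) auto
  also have "\<dots> = (\<Sum>S\<in>Pow I - {{}}. \<Sum>Ds\<in>OP (I - S) j. f (S # Ds))"
    by (rule sum.Sigma[symmetric]) (use assms in \<open>auto intro: finite_OP\<close>)
  finally show ?thesis .
qed

lemma dec_length: "finite I \<Longrightarrow> dec I Ss \<Longrightarrow> (\<forall>S\<in>set Ss. S \<noteq> {}) \<Longrightarrow> length Ss \<le> card I"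
proof (induction Ss arbitrary: I)
  case Nil then show ?case by simp
next
  case (Cons S Ss)
  have SI: "S \<subseteq> I" "S \<noteq> {}" using Cons.prems by auto
  have "length Ss \<le> card (I - S)" using Cons by auto
  moreover have "card (I - S) < card I"
    using SI Cons.prems(1) by (intro psubset_card_mono) auto
  ultimately show ?case by simp
qed

lemma OP_big: "finite I \<Longrightarrow> card I < j \<Longrightarrow> OP I j = {}"
proof (rule ccontr)
  assume "finite I" "card I < j" "OP I j \<noteq> {}"
  then obtain Ss where "Ss \<in> OP I j" by auto
  then have "length Ss = j" "dec I Ss" "\<forall>S\<in>set Ss. S \<noteq> {}" by (auto simp: OP_iff)
  then show False using dec_length[OF \<open>finite I\<close>] \<open>card I < j\<close> by fastforce
qed

definition cj :: "('a set \<Rightarrow> ('a \<Rightarrow> real) set \<Rightarrow> 'k::field) \<Rightarrow> 'a set \<Rightarrow> nat \<Rightarrow> ('a \<Rightarrow> real) set \<Rightarrow> 'k" where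
  "cj \<zeta> I j P = (\<Sum>Ss\<in>OP I j. zeta_tensor \<zeta> Ss P)"

lemma cj_Suc:
  assumes "finite I"
  shows "cj \<zeta> I (Suc j) P = (\<Sum>S\<in>Pow I - {{}}. \<zeta> S (restr P S) * cj \<zeta> (I - S) j (contr P S))"
  unfolding cj_def sum_OP_Suc[OF assms] by (simp add: sum_distrib_left)

lemma cj_0: "cj \<zeta> I 0 P = (if I = {} then 1 else 0)"
  by (simp add: cj_def OP_0)

lemma conv_pow_0: "conv_pow \<zeta> I 0 P = (if I = {} then 1 else 0)"
  by (simp add: conv_pow_def set_decomps_0)

lemma conv_pow_Suc:
  assumes "finite I"
  shows "conv_pow \<zeta> I (Suc k) P = (\<Sum>S\<in>Pow I. \<zeta> S (restr P S) * conv_pow \<zeta> (I - S) k (contr P S))"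
  unfolding conv_pow_def sum_set_decomps_Suc[OF assms] by (simp add: sum_distrib_left)

lemma max_face_empty: "max_face P {} = P"
  by (simp add: max_face_def)

lemma contr_empty: "contr P {} = P"
  by (simp add: contr_def max_face_empty)

lemma pascal:
  fixes a :: "nat \<Rightarrow> 'k::comm_ring_1"
  assumes "a (Suc N) = 0"
  shows "(\<Sum>j\<le>N. of_nat (Suc k choose j) * a j) = (\<Sum>j\<le>N. of_nat (k choose j) * a j) + (\<Sum>j\<le>N. of_nat (k choose j) * a (Suc j))"
proof -
  define g where "g j = (if j = 0 then 0 else of_nat (k choose (j - 1)) * a j)" for j
  have "(\<Sum>j\<le>Suc N. g j) = g 0 + (\<Sum>j\<le>N. g (Suc j))" by (rule sum.atMost_Suc_shift)
  then have "(\<Sum>j\<le>N. of_nat (k choose j) * a (Suc j)) = (\<Sum>j\<le>Suc N. g j)" by (simp add: g_def)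
  also have "\<dots> = (\<Sum>j\<le>N. g j)" using assms by (simp add: g_def)
  finally have e: "(\<Sum>j\<le>N. of_nat (k choose j) * a (Suc j)) = (\<Sum>j\<le>N. g j)" .
  have "(\<Sum>j\<le>N. of_nat (Suc k choose j) * a j) = (\<Sum>j\<le>N. of_nat (k choose j) * a j + g j)"
  proof (rule sum.cong[OF refl])
    fix j show "of_nat (Suc k choose j) * a j = of_nat (k choose j) * a j + g j"
      by (cases j) (simp_all add: g_def algebra_simps)
  qed
  then show ?thesis using e by (simp add: sum.distrib)
qed

lemma conv_pow_formula:
  fixes \<zeta> :: "'a set \<Rightarrow> ('a \<Rightarrow> real) set \<Rightarrow> 'k::field"
  assumes hopf: "hopf_subGP F" and char: "is_character F \<zeta>"
  shows "finite I \<Longrightarrow> P \<in> F I \<Longrightarrow> card I \<le> N \<Longrightarrow>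
         conv_pow \<zeta> I k P = (\<Sum>j\<le>N. of_nat (k choose j) * cj \<zeta> I j P)"
proof (induction k arbitrary: I P)
  case 0
  have "(\<Sum>j\<le>N. of_nat (0 choose j) * cj \<zeta> I j P) = cj \<zeta> I 0 P"
    by (subst sum.atMost_shift) (simp)
  then show ?case by (simp add: conv_pow_0 cj_0)
next
  case (Suc k)
  have z1: "\<zeta> {} {\<lambda>_. 0} = 1" using char by (simp add: is_character_def)
  have r0: "restr P {} = {\<lambda>_. 0}"
    using hopfD(2)[OF hopf Suc.prems(1) _ Suc.prems(2), of "{}"] hopfD(1)[OF hopf, of "{}"] gp_empty by blast
  have "conv_pow \<zeta> I (Suc k) P = (\<Sum>S\<in>Pow I. \<zeta> S (restr P S) * conv_pow \<zeta> (I - S) k (contr P S))"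
    by (rule conv_pow_Suc[OF Suc.prems(1)])
  also have "\<dots> = \<zeta> {} (restr P {}) * conv_pow \<zeta> (I - {}) k (contr P {}) +
      (\<Sum>S\<in>Pow I - {{}}. \<zeta> S (restr P S) * conv_pow \<zeta> (I - S) k (contr P S))"
    using Suc.prems(1) by (subst sum.remove[of _ "{}"]) auto
  also have "\<zeta> {} (restr P {}) * conv_pow \<zeta> (I - {}) k (contr P {}) = (\<Sum>j\<le>N. of_nat (k choose j) * cj \<zeta> I j P)"
    using Suc.IH[OF Suc.prems] by (simp add: r0 z1 contr_empty)
  also have "(\<Sum>S\<in>Pow I - {{}}. \<zeta> S (restr P S) * conv_pow \<zeta> (I - S) k (contr P S)) =
      (\<Sum>S\<in>Pow I - {{}}. \<zeta> S (restr P S) * (\<Sum>j\<le>N. of_nat (k choose j) * cj \<zeta> (I - S) j (contr P S)))"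
  proof (rule sum.cong[OF refl])
    fix S assume S: "S \<in> Pow I - {{}}"
    have "card (I - S) \<le> card I" using Suc.prems(1) by (simp add: card_mono)
    then show "\<zeta> S (restr P S) * conv_pow \<zeta> (I - S) k (contr P S) =
      \<zeta> S (restr P S) * (\<Sum>j\<le>N. of_nat (k choose j) * cj \<zeta> (I - S) j (contr P S))"
      using Suc.IH[of "I - S" "contr P S"] Suc.prems hopfD(3)[OF hopf Suc.prems(1) _ Suc.prems(2), of S] S by auto
  qed
  also have "\<dots> = (\<Sum>j\<le>N. of_nat (k choose j) * cj \<zeta> I (Suc j) P)"
    by (simp add: cj_Suc[OF Suc.prems(1)] sum_distrib_left sum.swap[of _ "Pow I - {{}}"] mult.left_commute)
  also have "(\<Sum>j\<le>N. of_nat (k choose j) * cj \<zeta> I j P) + (\<Sum>j\<le>N. of_nat (k choose j) * cj \<zeta> I (Suc j) P) =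
      (\<Sum>j\<le>N. of_nat (Suc k choose j) * cj \<zeta> I j P)"
  proof (rule pascal[symmetric])
    show "cj \<zeta> I (Suc N) P = 0" using OP_big[OF Suc.prems(1), of "Suc N"] Suc.prems(3) by (simp add: cj_def)
  qed
  finally show ?case .
qed

definition Bp :: "nat \<Rightarrow> 'k::field_char_0 poly" where
  "Bp j = smult (inverse (fact j)) (\<Prod>i<j. [:- of_nat i, 1:])"

lemma poly_Bp: "poly (Bp j) (of_nat k) = (of_nat (k choose j) :: 'k::field_char_0)"
proof -
  have "poly (Bp j) (of_nat k) = inverse (fact j) * (\<Prod>i<j. (of_nat k :: 'k) - of_nat i)"
    by (simp add: Bp_def poly_prod)
  also have "\<dots> = (of_nat k gchoose j)"
    by (simp add: gbinomial_prod_rev lessThan_atLeast0 field_simps)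
  also have "\<dots> = of_nat (k choose j)" by (simp add: binomial_gbinomial)
  finally show ?thesis .
qed

lemma poly_uniq:
  fixes p q :: "'k::field_char_0 poly"
  assumes "\<And>k::nat. k \<ge> 1 \<Longrightarrow> poly p (of_nat k) = poly q (of_nat k)"
  shows "p = q"
proof (rule ccontr)
  assume "p \<noteq> q"
  then have "p - q \<noteq> 0" by simp
  then have fin: "finite {x. poly (p - q) x = 0}" by (rule poly_roots_finite)
  have "of_nat ` {1..} \<subseteq> {x. poly (p - q) x = (0::'k)}" using assms by auto
  then have "finite (of_nat ` {1::nat..} :: 'k set)" using fin finite_subset by blast
  moreover have "inj_on (of_nat :: nat \<Rightarrow> 'k) {1..}" by (simp add: inj_on_def)
  ultimately have "finite {1::nat..}" using finite_imageD by blast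
  then show False using infinite_Ici[of "1::nat"] by simp
qed

lemma f_zeta_eq:
  fixes \<zeta> :: "'a set \<Rightarrow> ('a \<Rightarrow> real) set \<Rightarrow> 'k::field_char_0"
  assumes hopf: "hopf_subGP F" and char: "is_character F \<zeta>" and fin: "finite I" and P: "P \<in> F I"
  shows "f_zeta \<zeta> I P = (\<Sum>j\<le>card I. smult (cj \<zeta> I j P) (Bp j))"
proof -
  define p where "p = (\<Sum>j\<le>card I. smult (cj \<zeta> I j P) (Bp j))"
  have pk: "poly p (of_nat k) = conv_pow \<zeta> I k P" for k
    using conv_pow_formula[OF hopf char fin P order_refl, of k]
    by (simp add: p_def poly_sum poly_Bp mult.commute)
  have "f_zeta \<zeta> I P = p"
    unfolding f_zeta_def
  proof (rule the_equality)
    show "\<forall>k::nat. k \<ge> 1 \<longrightarrow> poly p (of_nat k) = conv_pow \<zeta> I k P" using pk by simp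
    fix q assume "\<forall>k::nat. k \<ge> 1 \<longrightarrow> poly q (of_nat k) = conv_pow \<zeta> I k P"
    then show "q = p" using pk by (intro poly_uniq) simp
  qed
  then show ?thesis by (simp add: p_def)
qed

lemma finite_ord_parts_card: "finite I \<Longrightarrow> finite {Ss \<in> ord_set_parts I. map card Ss = \<alpha>}"
  by (rule finite_subset[OF _ finite_set_decomps[of I "length \<alpha>"]])
     (auto simp: ord_set_parts_def dest: arg_cong[of _ _ length])

theorem mainTheorem4:
  fixes F :: "'a set \<Rightarrow> ('a \<Rightarrow> real) set set"
    and \<zeta> :: "'a set \<Rightarrow> ('a \<Rightarrow> real) set \<Rightarrow> 'k::field_char_0"
  assumes "hopf_subGP F"
    and "is_character F \<zeta>"
    and "\<And>J. finite J \<Longrightarrow> strong_valuation F J (*) (\<zeta> J)"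
    and "finite I"
  shows "strong_valuation F I smult (f_zeta \<zeta> I)
       \<and> strong_valuation F I (\<lambda>a g. \<lambda>\<alpha>. a * g \<alpha>) (Phi_zeta \<zeta> I)
       \<and> strong_valuation F I (\<lambda>a g. \<lambda>Ss. a * g Ss) (O_zeta \<zeta> I)"
proof -
  have zr: "\<And>J. finite J \<Longrightarrow> resp F J (\<zeta> J)" using assms(3) sv_imp_resp by blast
  have ztr: "resp F I (zeta_tensor \<zeta> Ss)" if "dec I Ss" for Ss
    using zt_resp[OF assms(1) zr assms(4) that] .
  have osp: "dec I Ss" if "Ss \<in> ord_set_parts I" for Ss
    using that by (simp add: ord_set_parts_def set_decomps_dec)
  have A: "strong_valuation F I smult (f_zeta \<zeta> I)"
  proof (rule sv_poly[where cc = "cj \<zeta> I" and N = "card I" and B = Bp])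
    fix j
    show "resp F I (cj \<zeta> I j)"
      unfolding cj_def[abs_def]
      by (rule resp_sum[OF finite_OP[OF assms(4)]]) (auto intro: ztr simp: OP_iff)
  next
    fix P assume "P \<in> F I"
    then show "f_zeta \<zeta> I P = (\<Sum>j\<le>card I. smult (cj \<zeta> I j P) (Bp j))"
      by (rule f_zeta_eq[OF assms(1,2,4)])
  qed
  have B: "strong_valuation F I (\<lambda>a g. \<lambda>\<alpha>. a * g \<alpha>) (Phi_zeta \<zeta> I)"
  proof -
    have e: "Phi_zeta \<zeta> I = (\<lambda>P. \<lambda>\<alpha>. \<Sum>Ss\<in>{Ss \<in> ord_set_parts I. map card Ss = \<alpha>}. zeta_tensor \<zeta> Ss P)"
      by (intro ext) (simp add: Phi_zeta_def)
    show ?thesis unfolding e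
      by (rule sv_fun, rule resp_sum[OF finite_ord_parts_card[OF assms(4)]]) (auto intro: ztr osp)
  qed
  have C: "strong_valuation F I (\<lambda>a g. \<lambda>Ss. a * g Ss) (O_zeta \<zeta> I)"
  proof -
    have e: "O_zeta \<zeta> I = (\<lambda>P. \<lambda>Ss. if Ss \<in> ord_set_parts I then zeta_tensor \<zeta> Ss P else 0)"
      by (intro ext) (simp add: O_zeta_def)
    show ?thesis unfolding e
    proof (rule sv_fun)
      fix Ss
      show "resp F I (\<lambda>P. if Ss \<in> ord_set_parts I then zeta_tensor \<zeta> Ss P else 0)"
        using ztr[OF osp] resp_zero by (cases "Ss \<in> ord_set_parts I") auto
    qed
  qed
  show ?thesis using A B C by blast
qed

end
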